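(* For all $n,m,N\in\mathbb{Z}$ the following bilinear equations hold: \begin{align*} &(1-Q^{-12m}{\alpha_2}^{12})\tau^{n,m}_{N+1}\tau^{n,m}_{N-1} +Q^{n-11m}\alpha_0{\alpha_2}^{11}\tau^{n+1,m+1}_{N}\tau^{n-1,m-1}_{N} -Q^{n-2m}\alpha_0{\alpha_2}^{2}\tau^{n,m+1}_{N}\tau^{n,m-1}_{N}=0,\\ &(1-Q^{12n}{\alpha_0}^{12})\tau^{n,m}_{N+1}\tau^{n,m}_{N-1} +Q^{10n+m}{\alpha_0}^{10}{\alpha_2}^{-1}\tau^{n+1,m}_{N}\tau^{n-1,m}_{N} -Q^{n+m}\alpha_0{\alpha_2}^{-1}\tau^{n+1,m+1}_{N}\tau^{n-1,m-1}_{N}=0,\\ &(1-Q^{12n-12m}{\alpha_0}^{12}{\alpha_2}^{12})\tau^{n,m}_{N+1}\tau^{n,m}_{N-1} +Q^{10n-11m}{\alpha_0}^{10}{\alpha_2}^{11}\tau^{n+1,m}_{N}\tau^{n-1,m}_{N} -Q^{n-2m}\alpha_0{\alpha_2}^{2}\tau^{n,m+1}_{N}\tau^{n,m-1}_{N}=0. \end{align*}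
   Context: Let $Q\in\mathbb{C}^\times$ be generic and let $\alpha_0,\alpha_1,\gamma$ be indeterminates; put $\alpha_2:=Q\alpha_0^{-1}\alpha_1^{-1}$, so $\alpha_0\alpha_1\alpha_2=Q$ (sixth roots of the usual parameters: $q=Q^6$, $a_i=\alpha_i^6$, $c=\gamma^6$). Let $\tau_i,\bar\tau_i$ ($i\in\mathbb{Z}/3\mathbb{Z}$) be six further indeterminates and $K=\mathbb{C}(\alpha_0,\alpha_1,\gamma,\tau_0,\tau_1,\tau_2,\bar\tau_0,\bar\tau_1,\bar\tau_2)$. Indices are taken mod 3. Define field automorphisms $s_0,s_1,s_2,\pi,w_0,w_1,r$ of $K$ (fixing $\mathbb{C}$): on parameters $s_i(\alpha_i)=\alpha_i^{-1}$, $s_i(\alpha_j)=\alpha_j\alpha_i$ ($j\neq i$), $\pi(\alpha_j)=\alpha_{j+1}$, $s_i(\gamma)=\pi(\gamma)=\gamma$; $w_0,w_1,r$ fix every $\alpha_j$, and $w_0(\gamma)=\gamma^{-1}$, $w_1(\gamma)=Q^{-2}\gamma^{-1}$, $r(\gamma)=Q^{-1}\gamma^{-1}$. With $u_i=Q^{-2}\gamma^{-4}\alpha_i^6$, $v_i=Q^{2}\gamma^{4}\alpha_i^6$: $s_i(\tau_i)=\dfrac{u_i\tau_{i+1}\bar\tau_{i-1}+\bar\tau_{i+1}\tau_{i-1}}{Q^{-1}\gamma^{-2}\alpha_i^{3}\,\bar\tau_i}$, $s_i(\bar\tau_i)=\dfrac{v_i\bar\tau_{i+1}\tau_{i-1}+\tau_{i+1}\bar\tau_{i-1}}{Q\gamma^{2}\alpha_i^{3}\,\tau_i}$,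 $s_i$ fixes $\tau_j,\bar\tau_j$ ($j\ne i$); $\pi(\tau_i)=\tau_{i+1}$, $\pi(\bar\tau_i)=\bar\tau_{i+1}$; $w_0(\tau_i)=\tau_i$, $w_0(\bar\tau_i)=\dfrac{\alpha_{i+1}^2(\bar\tau_i\tau_{i+1}\tau_{i+2}+u_{i-1}\tau_i\bar\tau_{i+1}\tau_{i+2}+u_{i+1}^{-1}\tau_i\tau_{i+1}\bar\tau_{i+2})}{\alpha_{i+2}^2\,\bar\tau_{i+1}\bar\tau_{i+2}}$; $w_1(\bar\tau_i)=\bar\tau_i$, $w_1(\tau_i)=\dfrac{\alpha_{i+1}^2(\tau_i\bar\tau_{i+1}\bar\tau_{i+2}+v_{i-1}\bar\tau_i\tau_{i+1}\bar\tau_{i+2}+v_{i+1}^{-1}\bar\tau_i\bar\tau_{i+1}\tau_{i+2})}{\alpha_{i+2}^2\,\tau_{i+1}\tau_{i+2}}$; $r(\tau_i)=\bar\tau_i$, $r(\bar\tau_i)=\tau_i$. Products of generators denote composition ($xy=x\circ y$). Set $T_1=\pi s_2s_1$, $T_2=s_1\pi s_2$, $T_4=rw_0$ (these commute), and define $\tau^{n,m}_N=T_1^{\,n}T_2^{\,m}T_4^{\,N}(\tau_1)$ for $n,m,N\in\mathbb{Z}$. *)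

theory Defs
  imports Complex_Main "HOL-Library.Poly_Mapping" "HOL-Library.Numeral_Type"
    "HOL-Computational_Algebra.Fraction_Field"
begin

text \<open>Nine indeterminates, indexed by the type 9 (0..8):
  0 = alpha0, 1 = alpha1, 2 = gamma, 3,4,5 = tau0,tau1,tau2, 6,7,8 = taubar0,taubar1,taubar2.\<close>

type_synonym mpoly = "(9 \<Rightarrow>\<^sub>0 nat) \<Rightarrow>\<^sub>0 complex"
type_synonym rfun = "mpoly fract"

definition mvar :: "9 \<Rightarrow> mpoly" where
  "mvar i = Poly_Mapping.single (Poly_Mapping.single i 1) 1"

definition mconst :: "complex \<Rightarrow> mpoly" where
  "mconst c = Poly_Mapping.single 0 c"

definition var :: "9 \<Rightarrow> rfun" where
  "var i = Fract (mvar i) 1"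

definition cst :: "complex \<Rightarrow> rfun" where
  "cst c = Fract (mconst c) 1"

definition evP :: "(9 \<Rightarrow> rfun) \<Rightarrow> mpoly \<Rightarrow> rfun" where
  "evP f p = (\<Sum>mo\<in>Poly_Mapping.keys p.
      cst (Poly_Mapping.lookup p mo) * (\<Prod>i\<in>Poly_Mapping.keys mo. f i ^ Poly_Mapping.lookup mo i))"

definition subst :: "(9 \<Rightarrow> rfun) \<Rightarrow> rfun \<Rightarrow> rfun" where
  "subst f x = (THE r. \<forall>a b. b \<noteq> 0 \<and> x = Fract a b \<longrightarrow> r = evP f a / evP f b)"

definition mkimg :: "rfun \<Rightarrow> rfun \<Rightarrow> rfun \<Rightarrow> (int \<Rightarrow> rfun) \<Rightarrow> (int \<Rightarrow> rfun) \<Rightarrow> 9 \<Rightarrow> rfun" where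
  "mkimg A0 A1 G T TB = (\<lambda>j.
     if j = 0 then A0 else if j = 1 then A1 else if j = 2 then G
     else if j = 3 then T 0 else if j = 4 then T 1 else if j = 5 then T 2
     else if j = 6 then TB 0 else if j = 7 then TB 1 else TB 2)"

definition tau :: "int \<Rightarrow> rfun" where
  "tau i = var (of_int (3 + i mod 3))"

definition taub :: "int \<Rightarrow> rfun" where
  "taub i = var (of_int (6 + i mod 3))"

definition gam :: rfun where "gam = var 2"

definition alpha :: "complex \<Rightarrow> int \<Rightarrow> rfun" where
  "alpha Q i = (if i mod 3 = 0 then var 0 else if i mod 3 = 1 then var 1
                else cst Q * inverse (var 0 * var 1))"

definition uu :: "complex \<Rightarrow> int \<Rightarrow> rfun" where
  "uu Q i = cst Q powi (-2) * gam powi (-4) * alpha Q i ^ 6"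

definition vv :: "complex \<Rightarrow> int \<Rightarrow> rfun" where
  "vv Q i = cst Q powi 2 * gam powi 4 * alpha Q i ^ 6"

definition s_aut :: "complex \<Rightarrow> int \<Rightarrow> rfun \<Rightarrow> rfun" where
  "s_aut Q i = subst (mkimg
     (if i mod 3 = 0 then inverse (alpha Q i) else alpha Q 0 * alpha Q i)
     (if i mod 3 = 1 then inverse (alpha Q i) else alpha Q 1 * alpha Q i)
     gam
     (\<lambda>j. if j mod 3 = i mod 3 then
           (uu Q i * tau (i+1) * taub (i-1) + taub (i+1) * tau (i-1))
           / (cst Q powi (-1) * gam powi (-2) * alpha Q i ^ 3 * taub i)
          else tau j)
     (\<lambda>j. if j mod 3 = i mod 3 then
           (vv Q i * taub (i+1) * tau (i-1) + tau (i+1) * taub (i-1))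
           / (cst Q * gam ^ 2 * alpha Q i ^ 3 * tau i)
          else taub j))"

definition pi_aut :: "complex \<Rightarrow> rfun \<Rightarrow> rfun" where
  "pi_aut Q = subst (mkimg (alpha Q 1) (alpha Q 2) gam (\<lambda>j. tau (j+1)) (\<lambda>j. taub (j+1)))"

definition w0_aut :: "complex \<Rightarrow> rfun \<Rightarrow> rfun" where
  "w0_aut Q = subst (mkimg (alpha Q 0) (alpha Q 1) (inverse gam) tau
     (\<lambda>i. alpha Q (i+1) ^ 2 * (taub i * tau (i+1) * tau (i+2)
            + uu Q (i-1) * tau i * taub (i+1) * tau (i+2)
            + inverse (uu Q (i+1)) * tau i * tau (i+1) * taub (i+2))
          / (alpha Q (i+2) ^ 2 * taub (i+1) * taub (i+2))))"

definition w1_aut :: "complex \<Rightarrow> rfun \<Rightarrow> rfun" where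
  "w1_aut Q = subst (mkimg (alpha Q 0) (alpha Q 1) (cst Q powi (-2) * inverse gam)
     (\<lambda>i. alpha Q (i+1) ^ 2 * (tau i * taub (i+1) * taub (i+2)
            + vv Q (i-1) * taub i * tau (i+1) * taub (i+2)
            + inverse (vv Q (i+1)) * taub i * taub (i+1) * tau (i+2))
          / (alpha Q (i+2) ^ 2 * tau (i+1) * tau (i+2)))
     taub)"

definition r_aut :: "complex \<Rightarrow> rfun \<Rightarrow> rfun" where
  "r_aut Q = subst (mkimg (alpha Q 0) (alpha Q 1) (cst Q powi (-1) * inverse gam) taub tau)"

definition zpow :: "('a \<Rightarrow> 'a) \<Rightarrow> int \<Rightarrow> 'a \<Rightarrow> 'a" where
  "zpow f n = (if 0 \<le> n then f ^^ nat n else (inv f) ^^ nat (- n))"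

definition T1 :: "complex \<Rightarrow> rfun \<Rightarrow> rfun" where
  "T1 Q = pi_aut Q \<circ> s_aut Q 2 \<circ> s_aut Q 1"

definition T2 :: "complex \<Rightarrow> rfun \<Rightarrow> rfun" where
  "T2 Q = s_aut Q 1 \<circ> pi_aut Q \<circ> s_aut Q 2"

definition T4 :: "complex \<Rightarrow> rfun \<Rightarrow> rfun" where
  "T4 Q = r_aut Q \<circ> w0_aut Q"

definition tauNM :: "complex \<Rightarrow> int \<Rightarrow> int \<Rightarrow> int \<Rightarrow> rfun" where
  "tauNM Q n m N = (zpow (T1 Q) n \<circ> zpow (T2 Q) m \<circ> zpow (T4 Q) N) (tau 1)"

end

theory Submission
  imports Defs
begin


lemma pm_decomp: "(p::'a \<Rightarrow>\<^sub>0 'b::comm_monoid_add) =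
   (\<Sum>k\<in>Poly_Mapping.keys p. Poly_Mapping.single k (Poly_Mapping.lookup p k))"
proof (rule poly_mapping_eqI)
  fix k'
  show "Poly_Mapping.lookup p k' = Poly_Mapping.lookup (\<Sum>k\<in>Poly_Mapping.keys p. Poly_Mapping.single k (Poly_Mapping.lookup p k)) k'"
    by (simp add: lookup_sum lookup_single when_def sum.delta in_keys_iff)
qed

definition chom :: "(complex \<Rightarrow> 'a::comm_ring_1) \<Rightarrow> bool" where
  "chom cc \<longleftrightarrow> (\<forall>a b. cc (a+b) = cc a + cc b) \<and> (\<forall>a b. cc (a*b) = cc a * cc b) \<and> cc 0 = 0 \<and> cc 1 = 1"

definition mon :: "(9 \<Rightarrow> 'a::comm_ring_1) \<Rightarrow> (9 \<Rightarrow>\<^sub>0 nat) \<Rightarrow> 'a" where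
  "mon f mo = (\<Prod>i\<in>Poly_Mapping.keys mo. f i ^ Poly_Mapping.lookup mo i)"

definition evG :: "(complex \<Rightarrow> 'a::comm_ring_1) \<Rightarrow> (9 \<Rightarrow> 'a) \<Rightarrow> mpoly \<Rightarrow> 'a" where
  "evG cc f p = (\<Sum>mo\<in>Poly_Mapping.keys p. cc (Poly_Mapping.lookup p mo) * mon f mo)"

lemma evP_evG: "evP f p = evG cst f p"
  by (simp add: evP_def evG_def mon_def)

lemma mon_UNIV: "mon f mo = (\<Prod>i\<in>UNIV. f i ^ Poly_Mapping.lookup mo i)"
  unfolding mon_def
  by (rule prod.mono_neutral_left) (auto simp: in_keys_iff)

lemma mon_add: "mon f (k + l) = mon f k * mon f l"
  by (simp add: mon_UNIV lookup_add power_add prod.distrib)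

lemma mon_zero [simp]: "mon f 0 = 1"
  by (simp add: mon_def)

lemma mon_single1: "mon f (Poly_Mapping.single i 1) = f i"
  by (simp add: mon_def)

context
  fixes cc :: "complex \<Rightarrow> 'a::comm_ring_1"
  assumes cc: "chom cc"
begin

lemma cc_add: "cc (a+b) = cc a + cc b" and cc_mult: "cc (a*b) = cc a * cc b"
  and cc_0: "cc 0 = 0" and cc_1: "cc 1 = 1"
  using cc by (auto simp: chom_def)

lemma evG_superset: "finite S \<Longrightarrow> Poly_Mapping.keys p \<subseteq> S \<Longrightarrow>
   evG cc f p = (\<Sum>mo\<in>S. cc (Poly_Mapping.lookup p mo) * mon f mo)"
  unfolding evG_def
  by (rule sum.mono_neutral_left) (auto simp: in_keys_iff cc_0)

lemma evG_add: "evG cc f (p + q) = evG cc f p + evG cc f q"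
proof -
  let ?S = "Poly_Mapping.keys p \<union> Poly_Mapping.keys q"
  have "evG cc f (p+q) = (\<Sum>mo\<in>?S. cc (Poly_Mapping.lookup (p+q) mo) * mon f mo)"
    using keys_add[of p q] by (intro evG_superset) auto
  also have "\<dots> = (\<Sum>mo\<in>?S. cc (Poly_Mapping.lookup p mo) * mon f mo) + (\<Sum>mo\<in>?S. cc (Poly_Mapping.lookup q mo) * mon f mo)"
    by (simp add: lookup_add cc_add distrib_right sum.distrib)
  also have "\<dots> = evG cc f p + evG cc f q"
    by (subst (1 2) evG_superset[of ?S]) auto
  finally show ?thesis .
qed

lemma evG_zero [simp]: "evG cc f 0 = 0"
  by (simp add: evG_def)

lemma evG_single: "evG cc f (Poly_Mapping.single k c) = cc c * mon f k"
  by (subst evG_superset[of "{k}"]) auto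

lemma evG_sum: "evG cc f (sum g S) = (\<Sum>x\<in>S. evG cc f (g x))"
  by (induction S rule: infinite_finite_induct) (auto simp: evG_add)

lemma evG_mult: "evG cc f (p * q) = evG cc f p * evG cc f q"
proof -
  have "p * q = (\<Sum>k\<in>Poly_Mapping.keys p. Poly_Mapping.single k (Poly_Mapping.lookup p k)) *
                (\<Sum>l\<in>Poly_Mapping.keys q. Poly_Mapping.single l (Poly_Mapping.lookup q l))"
    using pm_decomp[of p] pm_decomp[of q] by simp
  also have "\<dots> = (\<Sum>k\<in>Poly_Mapping.keys p. \<Sum>l\<in>Poly_Mapping.keys q.
        Poly_Mapping.single (k+l) (Poly_Mapping.lookup p k * Poly_Mapping.lookup q l))"
    by (simp add: sum_product mult_single)
  finally have "evG cc f (p*q) = (\<Sum>k\<in>Poly_Mapping.keys p. \<Sum>l\<in>Poly_Mapping.keys q.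
        cc (Poly_Mapping.lookup p k) * mon f k * (cc (Poly_Mapping.lookup q l) * mon f l))"
    by (simp add: evG_sum evG_single cc_mult mon_add mult_ac)
  also have "\<dots> = evG cc f p * evG cc f q"
    by (simp add: evG_def sum_product)
  finally show ?thesis .
qed

lemma evG_one [simp]: "evG cc f 1 = 1"
  using evG_single[where k=0 and c=1 and f=f] by (simp add: cc_1)

lemma evG_uminus: "evG cc f (- p) = - evG cc f p"
  using evG_add[of f p "-p"] by (simp add: eq_neg_iff_add_eq_0 add.commute)

lemma evG_diff: "evG cc f (p - q) = evG cc f p - evG cc f q"
  using evG_add[of f p "-q"] by (simp add: evG_uminus)

lemma evG_mvar [simp]: "evG cc f (mvar i) = f i"
  using mon_single1[of f i] by (simp add: mvar_def evG_single cc_1)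

lemma evG_mconst [simp]: "evG cc f (mconst c) = cc c"
  by (simp add: mconst_def evG_single)

end

lemma chom_id: "chom id" by (simp add: chom_def)

lemma cst_add: "cst (a+b) = cst a + cst b"
  by (simp add: cst_def mconst_def single_add)
lemma cst_mult: "cst (a*b) = cst a * cst b"
  by (simp add: cst_def mconst_def mult_single)
lemma cst_0 [simp]: "cst 0 = 0"
  by (simp add: cst_def mconst_def fract_collapse)
lemma cst_1 [simp]: "cst 1 = 1"
  by (simp add: cst_def mconst_def fract_collapse)
lemma chom_cst: "chom cst"
  by (simp add: chom_def cst_add cst_mult)


lemma mvar_power: "mvar i ^ e = Poly_Mapping.single (Poly_Mapping.single i e) 1"
  by (induction e) (simp_all add: mvar_def mult_single single_add[symmetric] add.commute)

lemma prod_single: "(\<Prod>i\<in>S. Poly_Mapping.single (g i) (1::complex)) = Poly_Mapping.single (\<Sum>i\<in>S. g i) 1"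
  by (induction S rule: infinite_finite_induct) (simp_all add: mult_single)

lemma Fract_add1: "Fract (a+b) 1 = Fract a 1 + Fract b 1"
  by simp
lemma Fract_mult1: "Fract (a*b) 1 = Fract a 1 * Fract b 1"
  by simp
lemma Fract_sum1: "Fract (sum g S) 1 = (\<Sum>x\<in>S. Fract (g x) 1)"
  by (induction S rule: infinite_finite_induct) (simp_all add: fract_collapse Fract_add1 del: add_fract)
lemma Fract_prod1: "Fract (prod g S) 1 = (\<Prod>x\<in>S. Fract (g x) 1)"
  by (induction S rule: infinite_finite_induct) (simp_all add: fract_collapse Fract_mult1 del: mult_fract)
lemma Fract_power1: "Fract (a ^ n) 1 = Fract a 1 ^ n"
  by (induction n) (simp_all add: fract_collapse Fract_mult1 del: mult_fract)

lemma Fract_single: "Fract (Poly_Mapping.single k c) 1 = cst c * mon var k"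
proof -
  have "mon var k = Fract (\<Prod>i\<in>Poly_Mapping.keys k. mvar i ^ Poly_Mapping.lookup k i) 1"
    by (simp add: mon_def Fract_prod1 Fract_power1 var_def)
  also have "(\<Prod>i\<in>Poly_Mapping.keys k. mvar i ^ Poly_Mapping.lookup k i) = Poly_Mapping.single k 1"
    by (simp add: mvar_power prod_single pm_decomp[of k, symmetric])
  finally show ?thesis
    by (simp add: cst_def mconst_def mult_single)
qed

lemma Fract_evP: "Fract p 1 = evP var p"
proof -
  have "Fract p 1 = (\<Sum>k\<in>Poly_Mapping.keys p. Fract (Poly_Mapping.single k (Poly_Mapping.lookup p k)) 1)"
    by (subst pm_decomp) (simp add: Fract_sum1)
  also have "\<dots> = evP var p"
    by (simp add: Fract_single evP_evG evG_def)
  finally show ?thesis .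
qed

lemma var_Fract: "var i = Fract (mvar i) 1" by (simp add: var_def)
lemma cst_Fract: "cst c = Fract (mconst c) 1" by (simp add: cst_def)

lemma Fract_div1: "b \<noteq> 0 \<Longrightarrow> Fract a b = Fract a 1 / Fract b 1"
  by (simp add: divide_fract_def)

definition good :: "(9 \<Rightarrow> rfun) \<Rightarrow> bool" where
  "good f \<longleftrightarrow> (\<forall>b. b \<noteq> 0 \<longrightarrow> evP f b \<noteq> 0)"

lemma evP_add: "evP f (p+q) = evP f p + evP f q" by (simp add: evP_evG evG_add[OF chom_cst])
lemma evP_mult: "evP f (p*q) = evP f p * evP f q" by (simp add: evP_evG evG_mult[OF chom_cst])
lemma evP_diff: "evP f (p-q) = evP f p - evP f q" by (simp add: evP_evG evG_diff[OF chom_cst])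
lemma evP_one: "evP f 1 = 1" by (simp add: evP_evG evG_one[OF chom_cst])
lemma evP_zero: "evP f 0 = 0" by (simp add: evP_evG evG_zero[OF chom_cst])
lemma evP_mvar: "evP f (mvar i) = f i" by (simp add: evP_evG evG_mvar[OF chom_cst])
lemma evP_mconst: "evP f (mconst c) = cst c" by (simp add: evP_evG evG_mconst[OF chom_cst])

lemma subst_Fract:
  assumes g: "good f" and b: "b \<noteq> 0"
  shows "subst f (Fract a b) = evP f a / evP f b"
  unfolding subst_def
proof (rule the_equality)
  show "\<forall>a' b'. b' \<noteq> 0 \<and> Fract a b = Fract a' b' \<longrightarrow> evP f a / evP f b = evP f a' / evP f b'"
  proof (intro allI impI)
    fix a' b' assume h: "b' \<noteq> 0 \<and> Fract a b = Fract a' b'"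
    then have "Fract a b = Fract a' b'" "b' \<noteq> 0" by auto
    then have "a * b' = a' * b" using b eq_fract(1) by blast
    then have "evP f a * evP f b' = evP f a' * evP f b" by (metis evP_mult)
    moreover have "evP f b \<noteq> 0" "evP f b' \<noteq> 0" using g b h by (auto simp: good_def)
    ultimately show "evP f a / evP f b = evP f a' / evP f b'"
      by (simp add: divide_simps)
  qed
next
  fix r assume "\<forall>a' b'. b' \<noteq> 0 \<and> Fract a b = Fract a' b' \<longrightarrow> r = evP f a' / evP f b'"
  then show "r = evP f a / evP f b" using b by blast
qed

definition fhom :: "(rfun \<Rightarrow> rfun) \<Rightarrow> bool" where
  "fhom h \<longleftrightarrow> (\<forall>x y. h (x+y) = h x + h y) \<and> (\<forall>x y. h (x*y) = h x * h y)
      \<and> (\<forall>x. h (inverse x) = inverse (h x)) \<and> (\<forall>c. h (cst c) = cst c)"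

lemma subst_zero: "good f \<Longrightarrow> subst f 0 = 0"
proof -
  assume g: "good f"
  have "subst f (Fract 0 1) = evP f 0 / evP f 1" by (rule subst_Fract[OF g]) simp
  then show ?thesis by (simp add: fract_collapse evP_zero evP_one)
qed

lemma good_fhom:
  assumes g: "good f" shows "fhom (subst f)"
proof -
  have nz: "b \<noteq> 0 \<Longrightarrow> evP f b \<noteq> 0" for b using g by (simp add: good_def)
  have add: "subst f (x+y) = subst f x + subst f y" for x y
  proof (cases x; cases y)
    fix a b c d assume x: "x = Fract a b" "b \<noteq> 0" and y: "y = Fract c d" "d \<noteq> 0"
    show ?thesis using x y nz[of b] nz[of d]
      by (simp add: subst_Fract[OF g] evP_add evP_mult field_simps)
  qed
  have mult: "subst f (x*y) = subst f x * subst f y" for x y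
  proof (cases x; cases y)
    fix a b c d assume x: "x = Fract a b" "b \<noteq> 0" and y: "y = Fract c d" "d \<noteq> 0"
    show ?thesis using x y nz[of b] nz[of d]
      by (simp add: subst_Fract[OF g] evP_add evP_mult field_simps)
  qed
  have inv: "subst f (inverse x) = inverse (subst f x)" for x
  proof (cases x)
    fix a b assume x: "x = Fract a b" "b \<noteq> 0"
    show ?thesis
    proof (cases "a = 0")
      case True
      then show ?thesis using x by (simp add: fract_collapse subst_zero[OF g])
    next
      case False
      then show ?thesis using x nz[of b] nz[of a] by (simp add: subst_Fract[OF g])
    qed
  qed
  have cst: "subst f (cst c) = cst c" for c
    by (simp add: cst_Fract subst_Fract[OF g] evP_mconst evP_one)
  show ?thesis using add mult inv cst by (simp add: fhom_def)
qed

lemma good_var: "good f \<Longrightarrow> subst f (var i) = f i"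
  by (simp add: var_Fract subst_Fract evP_mvar evP_one)

context fixes h assumes h: "fhom h"
begin
lemma fh_add: "h (x+y) = h x + h y" and fh_mult: "h (x*y) = h x * h y"
  and fh_inverse: "h (inverse x) = inverse (h x)" and fh_cst: "h (cst c) = cst c"
  using h by (auto simp: fhom_def)
lemma fh_0: "h 0 = 0"
proof -
  have "h 0 + h 0 = h 0" using fh_add[of 0 0] by simp
  then show ?thesis by (metis add.right_neutral add_left_imp_eq)
qed
lemma fh_1: "h 1 = 1" using fh_cst[of 1] by simp
lemma fh_uminus: "h (-x) = - h x" using fh_add[of x "-x"] by (simp add: fh_0 eq_neg_iff_add_eq_0 add.commute)
lemma fh_diff: "h (x-y) = h x - h y" using fh_add[of x "-y"] by (simp add: fh_uminus)
lemma fh_divide: "h (x/y) = h x / h y" by (simp add: divide_inverse fh_mult fh_inverse)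
lemma fh_power: "h (x^n) = h x ^ n" by (induction n) (simp_all add: fh_1 fh_mult)
lemma fh_powi: "h (x powi k) = h x powi k"
  by (simp add: power_int_def fh_power fh_inverse)
lemma fh_sum: "h (sum g S) = (\<Sum>x\<in>S. h (g x))"
  by (induction S rule: infinite_finite_induct) (simp_all add: fh_0 fh_add)
lemma fh_prod: "h (prod g S) = (\<Prod>x\<in>S. h (g x))"
  by (induction S rule: infinite_finite_induct) (simp_all add: fh_1 fh_mult)
lemma fh_numeral: "h (numeral k) = numeral k"
proof -
  have "Fract (numeral k) 1 = (numeral k :: rfun)" by (metis Fract_of_nat_eq of_nat_numeral)
  then show ?thesis using fh_cst[of "numeral k"] by (simp add: cst_def mconst_def)
qed
lemma fh_eq0: "h x = 0 \<longleftrightarrow> x = 0"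
proof
  assume "h x = 0"
  show "x = 0"
  proof (rule ccontr)
    assume "x \<noteq> 0"
    then have "h (x * inverse x) = 1" by (simp add: fh_1)
    then show False using \<open>h x = 0\<close> by (simp add: fh_mult)
  qed
qed (simp add: fh_0)
lemma fh_inj: "inj h"
proof (rule injI)
  fix x y assume "h x = h y" then have "h (x - y) = 0" by (simp add: fh_diff)
  then show "x = y" by (simp add: fh_eq0)
qed
lemma fh_evP: "h (evP f p) = evP (h \<circ> f) p"
  by (simp add: evP_def fh_sum fh_mult fh_prod fh_power fh_cst)
lemma fh_Fract: "h (Fract a b) = evP (\<lambda>i. h (var i)) a / evP (\<lambda>i. h (var i)) b"
proof (cases "b = 0")
  case True then show ?thesis by (simp add: fract_collapse fh_0 evP_zero)
next
  case False
  then show ?thesis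
    by (simp add: Fract_div1[of b a] Fract_evP fh_divide fh_evP comp_def)
qed
end

lemma fhom_ext: "fhom h \<Longrightarrow> fhom k \<Longrightarrow> (\<And>i. h (var i) = k (var i)) \<Longrightarrow> h = k"
proof
  fix x assume h: "fhom h" and k: "fhom k" and e: "\<And>i. h (var i) = k (var i)"
  show "h x = k x"
    by (cases x) (simp add: fh_Fract[OF h] fh_Fract[OF k] e)
qed

lemma fhom_comp: "fhom h \<Longrightarrow> fhom k \<Longrightarrow> fhom (h \<circ> k)"
  by (simp add: fhom_def)

lemma fhom_id: "fhom id" by (simp add: fhom_def)


definition pe :: "(complex \<Rightarrow> 'a::field) \<Rightarrow> (9 \<Rightarrow> 'a) \<Rightarrow> rfun \<Rightarrow> 'a \<Rightarrow> bool" where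
  "pe cc g x y \<longleftrightarrow> (\<exists>a b. b \<noteq> 0 \<and> x = Fract a b \<and> evG cc g b \<noteq> 0 \<and> y = evG cc g a / evG cc g b)"

context
  fixes cc :: "complex \<Rightarrow> 'a::field"
  assumes cc: "chom cc"
begin

lemma pe_fun: assumes "pe cc g x y" "pe cc g x y'" shows "y = y'"
proof -
  obtain a b where 1: "b \<noteq> 0" "x = Fract a b" "evG cc g b \<noteq> 0" "y = evG cc g a / evG cc g b"
    using assms(1) by (auto simp: pe_def)
  obtain a' b' where 2: "b' \<noteq> 0" "x = Fract a' b'" "evG cc g b' \<noteq> 0" "y' = evG cc g a' / evG cc g b'"
    using assms(2) by (auto simp: pe_def)
  have "a * b' = a' * b" using 1 2 eq_fract(1) by metis
  then have "evG cc g a * evG cc g b' = evG cc g a' * evG cc g b" by (metis evG_mult[OF cc])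
  then show ?thesis unfolding 1(4) 2(4) using 1(3) 2(3) by (simp add: frac_eq_eq)
qed

lemma pe_var: "pe cc g (var i) (g i)"
  unfolding pe_def by (rule exI[of _ "mvar i"], rule exI[of _ 1])
    (simp add: var_Fract evG_mvar[OF cc] evG_one[OF cc])

lemma pe_cst: "pe cc g (cst c) (cc c)"
  unfolding pe_def by (rule exI[of _ "mconst c"], rule exI[of _ 1])
    (simp add: cst_Fract evG_mconst[OF cc] evG_one[OF cc])

lemma pe_0: "pe cc g 0 0"
  using pe_cst[of g 0] by (simp add: cc_0[OF cc])

lemma pe_1: "pe cc g 1 1"
  using pe_cst[of g 1] by (simp add: cc_1[OF cc])

lemma pe_add: assumes "pe cc g x u" "pe cc g y v" shows "pe cc g (x+y) (u+v)"
proof -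
  obtain a b where 1: "b \<noteq> 0" "x = Fract a b" "evG cc g b \<noteq> 0" "u = evG cc g a / evG cc g b"
    using assms(1) by (auto simp: pe_def)
  obtain c d where 2: "d \<noteq> 0" "y = Fract c d" "evG cc g d \<noteq> 0" "v = evG cc g c / evG cc g d"
    using assms(2) by (auto simp: pe_def)
  show ?thesis unfolding pe_def 1(4) 2(4)
    by (rule exI[of _ "a*d + c*b"], rule exI[of _ "b*d"])
      (use 1(1-3) 2(1-3) in \<open>simp add: evG_mult[OF cc] evG_add[OF cc] field_simps\<close>)
qed

lemma pe_mult: assumes "pe cc g x u" "pe cc g y v" shows "pe cc g (x*y) (u*v)"
proof -
  obtain a b where 1: "b \<noteq> 0" "x = Fract a b" "evG cc g b \<noteq> 0" "u = evG cc g a / evG cc g b"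
    using assms(1) by (auto simp: pe_def)
  obtain c d where 2: "d \<noteq> 0" "y = Fract c d" "evG cc g d \<noteq> 0" "v = evG cc g c / evG cc g d"
    using assms(2) by (auto simp: pe_def)
  show ?thesis unfolding pe_def 1(4) 2(4)
    by (rule exI[of _ "a*c"], rule exI[of _ "b*d"])
      (use 1(1-3) 2(1-3) in \<open>simp add: evG_mult[OF cc] field_simps\<close>)
qed

lemma pe_uminus: assumes "pe cc g x u" shows "pe cc g (-x) (-u)"
proof -
  obtain a b where 1: "b \<noteq> 0" "x = Fract a b" "evG cc g b \<noteq> 0" "u = evG cc g a / evG cc g b"
    using assms(1) by (auto simp: pe_def)
  show ?thesis unfolding pe_def
    by (rule exI[of _ "-a"], rule exI[of _ "b"])
      (use 1 in \<open>simp add: evG_uminus[OF cc]\<close>)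
qed

lemma pe_diff: "pe cc g x u \<Longrightarrow> pe cc g y v \<Longrightarrow> pe cc g (x-y) (u-v)"
  using pe_add[of g x u "-y" "-v"] pe_uminus[of g y v] by simp

lemma pe_inverse: assumes "pe cc g x u" "u \<noteq> 0" shows "pe cc g (inverse x) (inverse u)"
proof -
  obtain a b where 1: "b \<noteq> 0" "x = Fract a b" "evG cc g b \<noteq> 0" "u = evG cc g a / evG cc g b"
    using assms(1) by (auto simp: pe_def)
  have a: "evG cc g a \<noteq> 0" using 1 assms(2) by simp
  then have "a \<noteq> 0" by (auto simp: evG_zero[OF cc])
  show ?thesis unfolding pe_def
    by (rule exI[of _ "b"], rule exI[of _ "a"])
      (use 1 a \<open>a \<noteq> 0\<close> in simp)
qed

lemma pe_divide: "pe cc g x u \<Longrightarrow> pe cc g y v \<Longrightarrow> v \<noteq> 0 \<Longrightarrow> pe cc g (x/y) (u/v)"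
  by (simp add: divide_inverse pe_mult pe_inverse)

lemma pe_power: "pe cc g x u \<Longrightarrow> pe cc g (x^n) (u^n)"
  by (induction n) (simp_all add: pe_1 pe_mult)

lemma pe_powi: "pe cc g x u \<Longrightarrow> u \<noteq> 0 \<Longrightarrow> pe cc g (x powi k) (u powi k)"
  by (simp add: power_int_def pe_power pe_inverse)

lemma pe_sum: "(\<And>s. s \<in> S \<Longrightarrow> pe cc g (X s) (U s)) \<Longrightarrow> pe cc g (sum X S) (sum U S)"
  by (induction S rule: infinite_finite_induct) (simp_all add: pe_0 pe_add)

lemma pe_prod: "(\<And>s. s \<in> S \<Longrightarrow> pe cc g (X s) (U s)) \<Longrightarrow> pe cc g (prod X S) (prod U S)"
  by (induction S rule: infinite_finite_induct) (simp_all add: pe_1 pe_mult)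

lemma pe_evP: "(\<And>i. pe cc g (f i) (h i)) \<Longrightarrow> pe cc g (evP f p) (evG cc h p)"
  unfolding evP_def evG_def mon_def
  by (intro pe_sum pe_mult pe_cst pe_prod pe_power) auto

end

lemma pe_good: assumes "\<And>i. pe cst g (f i) (var i)" shows "good f"
  unfolding good_def
proof (intro allI impI)
  fix b :: mpoly assume b: "b \<noteq> 0"
  show "evP f b \<noteq> 0"
  proof
    assume 0: "evP f b = 0"
    have "pe cst g (evP f b) (evG cst var b)" by (rule pe_evP[OF chom_cst assms])
    moreover have "pe cst g (evP f b) 0" using 0 pe_0[OF chom_cst] by simp
    ultimately have "evG cst var b = 0" by (rule pe_fun[OF chom_cst])
    then have "Fract b 1 = 0" by (simp add: Fract_evP evP_evG)
    then show False using b by (simp add: Zero_fract_def eq_fract)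
  qed
qed

lemma pe_nonzero: "pe id c x v \<Longrightarrow> v \<noteq> 0 \<Longrightarrow> x \<noteq> 0"
  using pe_fun[OF chom_id, of c x v 0] pe_0[OF chom_id] by auto


lemma nine: "(k::9) = 0 \<or> k = 1 \<or> k = 2 \<or> k = 3 \<or> k = 4 \<or> k = 5 \<or> k = 6 \<or> k = 7 \<or> k = 8"
proof (cases k rule: bit1_cases)
  case (of_int z)
  then have "z = 0 \<or> z = 1 \<or> z = 2 \<or> z = 3 \<or> z = 4 \<or> z = 5 \<or> z = 6 \<or> z = 7 \<or> z = 8" by auto
  then show ?thesis using of_int by auto
qed

lemma pe_eq: "pe cc g x y \<Longrightarrow> y = z \<Longrightarrow> pe cc g x z" by simp

lemmas pe_rules = pe_add pe_mult pe_diff pe_uminus pe_divide pe_inverse pe_powi pe_power pe_var pe_cst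

lemma var_nz [simp]: "var i \<noteq> 0"
  by (rule pe_nonzero[of "\<lambda>_. 1"], rule pe_var[OF chom_id]) simp

lemma cst_nz [simp]: "cst c = 0 \<longleftrightarrow> c = 0"
proof
  assume "cst c = 0"
  moreover have "pe id (\<lambda>_. 1) (cst c) c" using pe_cst[OF chom_id] by simp
  ultimately show "c = 0" using pe_0[OF chom_id] pe_fun[OF chom_id] by metis
qed simp

lemma tau_simps [simp]: "tau 0 = var 3" "tau 1 = var 4" "tau 2 = var 5"
  "tau 3 = var 3" "tau (-1) = var 5" "tau 4 = var 4"
  by (simp_all add: tau_def)
lemma taub_simps [simp]: "taub 0 = var 6" "taub 1 = var 7" "taub 2 = var 8"
  "taub 3 = var 6" "taub (-1) = var 8" "taub 4 = var 7"
  by (simp_all add: taub_def)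
lemma gam_simp [simp]: "gam = var 2" by (simp add: gam_def)
lemma alpha_simps [simp]: "alpha Q 0 = var 0" "alpha Q 1 = var 1"
  "alpha Q 2 = cst Q * inverse (var 0 * var 1)"
  "alpha Q 3 = var 0" "alpha Q 4 = var 1" "alpha Q (-1) = cst Q * inverse (var 0 * var 1)"
  by (simp_all add: alpha_def)

definition sI :: "complex \<Rightarrow> int \<Rightarrow> 9 \<Rightarrow> rfun" where
  "sI Q i = mkimg
     (if i mod 3 = 0 then inverse (alpha Q i) else alpha Q 0 * alpha Q i)
     (if i mod 3 = 1 then inverse (alpha Q i) else alpha Q 1 * alpha Q i)
     gam
     (\<lambda>j. if j mod 3 = i mod 3 then
           (uu Q i * tau (i+1) * taub (i-1) + taub (i+1) * tau (i-1))
           / (cst Q powi (-1) * gam powi (-2) * alpha Q i ^ 3 * taub i)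
          else tau j)
     (\<lambda>j. if j mod 3 = i mod 3 then
           (vv Q i * taub (i+1) * tau (i-1) + tau (i+1) * taub (i-1))
           / (cst Q * gam ^ 2 * alpha Q i ^ 3 * tau i)
          else taub j)"

lemma s_aut_sI: "s_aut Q i = subst (sI Q i)" by (simp add: s_aut_def sI_def)

lemma uu_m1: "uu Q (-1) = uu Q 2" and uu_3: "uu Q 3 = uu Q 0"
  by (simp_all add: uu_def)

definition piI :: "complex \<Rightarrow> 9 \<Rightarrow> rfun" where
  "piI Q = mkimg (alpha Q 1) (alpha Q 2) gam (\<lambda>j. tau (j+1)) (\<lambda>j. taub (j+1))"
definition pinvI :: "complex \<Rightarrow> 9 \<Rightarrow> rfun" where
  "pinvI Q = mkimg (alpha Q 2) (alpha Q 0) gam (\<lambda>j. tau (j-1)) (\<lambda>j. taub (j-1))"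
definition w0I :: "complex \<Rightarrow> 9 \<Rightarrow> rfun" where
  "w0I Q = mkimg (alpha Q 0) (alpha Q 1) (inverse gam) tau
     (\<lambda>i. alpha Q (i+1) ^ 2 * (taub i * tau (i+1) * tau (i+2)
            + uu Q (i-1) * tau i * taub (i+1) * tau (i+2)
            + inverse (uu Q (i+1)) * tau i * tau (i+1) * taub (i+2))
          / (alpha Q (i+2) ^ 2 * taub (i+1) * taub (i+2)))"
definition rI :: "complex \<Rightarrow> 9 \<Rightarrow> rfun" where
  "rI Q = mkimg (alpha Q 0) (alpha Q 1) (cst Q powi (-1) * inverse gam) taub tau"

lemma pi_aut_piI: "pi_aut Q = subst (piI Q)" by (simp add: pi_aut_def piI_def)
lemma w0_aut_w0I: "w0_aut Q = subst (w0I Q)" by (simp add: w0_aut_def w0I_def)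
lemma r_aut_rI: "r_aut Q = subst (rI Q)" by (simp add: r_aut_def rI_def)

lemma sI0: "sI Q 0 0 = inverse (var 0)" "sI Q 0 1 = var 1 * var 0" "sI Q 0 2 = var 2" "sI Q 0 3 = (uu Q 0 * var 4 * var 8 + var 7 * var 5) / (cst Q powi (-1) * var 2 powi (-2) * var 0 ^ 3 * var 6)" "sI Q 0 4 = var 4" "sI Q 0 5 = var 5" "sI Q 0 6 = (vv Q 0 * var 7 * var 5 + var 4 * var 8) / (cst Q * var 2 ^ 2 * var 0 ^ 3 * var 3)" "sI Q 0 7 = var 7" "sI Q 0 8 = var 8"
  by (simp_all add: sI_def mkimg_def)

lemma sI1: "sI Q 1 0 = var 0 * var 1" "sI Q 1 1 = inverse (var 1)" "sI Q 1 2 = var 2" "sI Q 1 3 = var 3" "sI Q 1 4 = (uu Q 1 * var 5 * var 6 + var 8 * var 3) / (cst Q powi (-1) * var 2 powi (-2) * var 1 ^ 3 * var 7)" "sI Q 1 5 = var 5" "sI Q 1 6 = var 6" "sI Q 1 7 = (vv Q 1 * var 8 * var 3 + var 5 * var 6) / (cst Q * var 2 ^ 2 * var 1 ^ 3 * var 4)" "sI Q 1 8 = var 8"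
  by (simp_all add: sI_def mkimg_def)

lemma sI2: "sI Q 2 0 = var 0 * (cst Q * inverse (var 0 * var 1))" "sI Q 2 1 = var 1 * (cst Q * inverse (var 0 * var 1))" "sI Q 2 2 = var 2" "sI Q 2 3 = var 3" "sI Q 2 4 = var 4" "sI Q 2 5 = (uu Q 2 * var 3 * var 7 + var 6 * var 4) / (cst Q powi (-1) * var 2 powi (-2) * (cst Q * inverse (var 0 * var 1)) ^ 3 * var 8)" "sI Q 2 6 = var 6" "sI Q 2 7 = var 7" "sI Q 2 8 = (vv Q 2 * var 6 * var 4 + var 3 * var 7) / (cst Q * var 2 ^ 2 * (cst Q * inverse (var 0 * var 1)) ^ 3 * var 5)"
  by (simp_all add: sI_def mkimg_def)

lemma w0I_tab: "w0I Q 0 = var 0" "w0I Q 1 = var 1" "w0I Q 2 = inverse (var 2)" "w0I Q 3 = var 3" "w0I Q 4 = var 4" "w0I Q 5 = var 5" "w0I Q 6 = var 1 ^ 2 * (var 6 * var 4 * var 5 + uu Q 2 * var 3 * var 7 * var 5 + inverse (uu Q 1) * var 3 * var 4 * var 8) / ((cst Q * inverse (var 0 * var 1)) ^ 2 * var 7 * var 8)" "w0I Q 7 = (cst Q * inverse (var 0 * var 1)) ^ 2 * (var 7 * var 5 * var 3 + uu Q 0 * var 4 * var 8 * var 3 + inverse (uu Q 2) * var 4 * var 5 * var 6) / (var 0 ^ 2 * var 8 * var 6)" "w0I Q 8 = var 0 ^ 2 * (var 8 * var 3 * var 4 + uu Q 1 * var 5 * var 6 * var 4 + inverse (uu Q 0)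 * var 5 * var 3 * var 7) / (var 1 ^ 2 * var 6 * var 7)"
  by (simp_all add: w0I_def mkimg_def uu_m1 uu_3)

lemma piI_tab: "piI Q 0 = var 1" "piI Q 1 = cst Q * inverse (var 0 * var 1)" "piI Q 2 = var 2"
  "piI Q 3 = var 4" "piI Q 4 = var 5" "piI Q 5 = var 3" "piI Q 6 = var 7" "piI Q 7 = var 8" "piI Q 8 = var 6"
  by (simp_all add: piI_def mkimg_def)
lemma pinvI_tab: "pinvI Q 0 = cst Q * inverse (var 0 * var 1)" "pinvI Q 1 = var 0" "pinvI Q 2 = var 2"
  "pinvI Q 3 = var 5" "pinvI Q 4 = var 3" "pinvI Q 5 = var 4" "pinvI Q 6 = var 8" "pinvI Q 7 = var 6" "pinvI Q 8 = var 7"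
  by (simp_all add: pinvI_def mkimg_def)
lemma rI_tab: "rI Q 0 = var 0" "rI Q 1 = var 1" "rI Q 2 = cst Q powi (-1) * inverse (var 2)"
  "rI Q 3 = var 6" "rI Q 4 = var 7" "rI Q 5 = var 8" "rI Q 6 = var 3" "rI Q 7 = var 4" "rI Q 8 = var 5"
  by (simp_all add: rI_def mkimg_def)

lemma nine_all: "P 0 \<Longrightarrow> P 1 \<Longrightarrow> P 2 \<Longrightarrow> P 3 \<Longrightarrow> P 4 \<Longrightarrow> P 5 \<Longrightarrow> P 6 \<Longrightarrow> P 7 \<Longrightarrow> P 8 \<Longrightarrow> P (k::9)"
  using nine[of k] by auto

lemma chc: "chom cst" by (rule chom_cst)
lemmas pe_rulesc = pe_add[OF chc] pe_mult[OF chc] pe_diff[OF chc] pe_uminus[OF chc] pe_divide[OF chc] pe_inverse[OF chc] pe_powi[OF chc] pe_power[OF chc] pe_var[OF chc] pe_cst[OF chc]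
lemmas pe_rulesi = pe_add[OF chom_id] pe_mult[OF chom_id] pe_diff[OF chom_id] pe_uminus[OF chom_id] pe_divide[OF chom_id] pe_inverse[OF chom_id] pe_powi[OF chom_id] pe_power[OF chom_id] pe_var[OF chom_id] pe_cst[OF chom_id]

lemmas ptab = sI0 sI1 sI2 w0I_tab piI_tab pinvI_tab rI_tab

context fixes Q :: complex assumes Q: "Q \<noteq> 0"
begin

lemma uu_nz [simp]: "uu Q i \<noteq> 0" and vv_nz [simp]: "vv Q i \<noteq> 0"
  by (simp_all add: uu_def vv_def alpha_def Q)

lemma Npoly:
 "uu Q 0 * var 4 * var 8 + var 7 * var 5 \<noteq> 0"
 "vv Q 0 * var 7 * var 5 + var 4 * var 8 \<noteq> 0"
 "uu Q 1 * var 5 * var 6 + var 8 * var 3 \<noteq> 0"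
 "vv Q 1 * var 8 * var 3 + var 5 * var 6 \<noteq> 0"
 "uu Q 2 * var 3 * var 7 + var 6 * var 4 \<noteq> 0"
 "vv Q 2 * var 6 * var 4 + var 3 * var 7 \<noteq> 0"
 "var 6 * var 4 * var 5 + uu Q 2 * var 3 * var 7 * var 5 + inverse (uu Q 1) * var 3 * var 4 * var 8 \<noteq> 0"
 "var 7 * var 5 * var 3 + uu Q 0 * var 4 * var 8 * var 3 + inverse (uu Q 2) * var 4 * var 5 * var 6 \<noteq> 0"
 "var 8 * var 3 * var 4 + uu Q 1 * var 5 * var 6 * var 4 + inverse (uu Q 0) * var 5 * var 3 * var 7 \<noteq> 0"
  apply (rule pe_nonzero[where c="\<lambda>k. if k = 7 then 0 else 1"], (rule pe_rulesi | simp add: Q power_int_minus uu_def vv_def)+)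
  apply (rule pe_nonzero[where c="\<lambda>k. if k = 4 then 0 else 1"], (rule pe_rulesi | simp add: Q power_int_minus uu_def vv_def)+)
  apply (rule pe_nonzero[where c="\<lambda>k. if k = 8 then 0 else 1"], (rule pe_rulesi | simp add: Q power_int_minus uu_def vv_def)+)
  apply (rule pe_nonzero[where c="\<lambda>k. if k = 5 then 0 else 1"], (rule pe_rulesi | simp add: Q power_int_minus uu_def vv_def)+)
  apply (rule pe_nonzero[where c="\<lambda>k. if k = 6 then 0 else 1"], (rule pe_rulesi | simp add: Q power_int_minus uu_def vv_def)+)
  apply (rule pe_nonzero[where c="\<lambda>k. if k = 3 then 0 else 1"], (rule pe_rulesi | simp add: Q power_int_minus uu_def vv_def)+)
  apply (rule pe_nonzero[where c="\<lambda>k. if k = 7 \<or> k = 8 then 0 else 1"], (rule pe_rulesi | simp add: Q power_int_minus uu_def vv_def)+)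
  apply (rule pe_nonzero[where c="\<lambda>k. if k = 8 \<or> k = 6 then 0 else 1"], (rule pe_rulesi | simp add: Q power_int_minus uu_def vv_def)+)
  apply (rule pe_nonzero[where c="\<lambda>k. if k = 6 \<or> k = 7 then 0 else 1"], (rule pe_rulesi | simp add: Q power_int_minus uu_def vv_def)+)
  done

lemma tab_nz:
  "sI Q 0 k \<noteq> 0" "sI Q 1 k \<noteq> 0" "sI Q 2 k \<noteq> 0" "w0I Q k \<noteq> 0" "piI Q k \<noteq> 0" "pinvI Q k \<noteq> 0" "rI Q k \<noteq> 0"
  using nine[of k] Npoly Q by (auto simp: ptab)


lemma pe_s0: "pe cst (sI Q 0) (sI Q 0 k) (var k)"
  by (rule nine_all[where P="\<lambda>k. pe cst (sI Q 0) (sI Q 0 k) (var k)"]; rule pe_eq, unfold ptab, (rule pe_rulesc | simp add: Q tab_nz power_int_minus uu_def vv_def)+, (simp add: Q tab_nz power_int_minus field_simps)?, (simp add: Q ptab uu_def vv_def power_int_minus field_simps)?, algebra?)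
lemma good_s0: "good (sI Q 0)"
  by (rule pe_good[where g="sI Q 0"], rule pe_s0)

lemma pe_s1: "pe cst (sI Q 1) (sI Q 1 k) (var k)"
  by (rule nine_all[where P="\<lambda>k. pe cst (sI Q 1) (sI Q 1 k) (var k)"]; rule pe_eq, unfold ptab, (rule pe_rulesc | simp add: Q tab_nz power_int_minus uu_def vv_def)+, (simp add: Q tab_nz power_int_minus field_simps)?, (simp add: Q ptab uu_def vv_def power_int_minus field_simps)?, algebra?)
lemma good_s1: "good (sI Q 1)"
  by (rule pe_good[where g="sI Q 1"], rule pe_s1)

lemma pe_s2: "pe cst (sI Q 2) (sI Q 2 k) (var k)"
  by (rule nine_all[where P="\<lambda>k. pe cst (sI Q 2) (sI Q 2 k) (var k)"]; rule pe_eq, unfold ptab, (rule pe_rulesc | simp add: Q tab_nz power_int_minus uu_def vv_def)+, (simp add: Q tab_nz power_int_minus field_simps)?, (simp add: Q ptab uu_def vv_def power_int_minus field_simps)?, algebra?)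
lemma good_s2: "good (sI Q 2)"
  by (rule pe_good[where g="sI Q 2"], rule pe_s2)

lemma pe_w0: "pe cst (w0I Q) (w0I Q k) (var k)"
  by (rule nine_all[where P="\<lambda>k. pe cst (w0I Q) (w0I Q k) (var k)"]; rule pe_eq, unfold ptab, (rule pe_rulesc | simp add: Q tab_nz power_int_minus uu_def vv_def)+, (simp add: Q tab_nz power_int_minus field_simps)?, (simp add: Q ptab uu_def vv_def power_int_minus field_simps)?, algebra?)
lemma good_w0: "good (w0I Q)"
  by (rule pe_good[where g="w0I Q"], rule pe_w0)

lemma pe_r: "pe cst (rI Q) (rI Q k) (var k)"
  by (rule nine_all[where P="\<lambda>k. pe cst (rI Q) (rI Q k) (var k)"]; rule pe_eq, unfold ptab, (rule pe_rulesc | simp add: Q tab_nz power_int_minus uu_def vv_def)+, (simp add: Q tab_nz power_int_minus field_simps)?, (simp add: Q ptab uu_def vv_def power_int_minus field_simps)?, algebra?)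
lemma good_r: "good (rI Q)"
  by (rule pe_good[where g="rI Q"], rule pe_r)

lemma pe_pi: "pe cst (pinvI Q) (piI Q k) (var k)"
  by (rule nine_all[where P="\<lambda>k. pe cst (pinvI Q) (piI Q k) (var k)"]; rule pe_eq, unfold ptab, (rule pe_rulesc | simp add: Q tab_nz power_int_minus uu_def vv_def)+, (simp add: Q tab_nz power_int_minus field_simps)?, (simp add: Q ptab uu_def vv_def power_int_minus field_simps)?, algebra?)
lemma good_pi: "good (piI Q)"
  by (rule pe_good[where g="pinvI Q"], rule pe_pi)

lemma pe_pinv: "pe cst (piI Q) (pinvI Q k) (var k)"
  by (rule nine_all[where P="\<lambda>k. pe cst (piI Q) (pinvI Q k) (var k)"]; rule pe_eq, unfold ptab, (rule pe_rulesc | simp add: Q tab_nz power_int_minus uu_def vv_def)+, (simp add: Q tab_nz power_int_minus field_simps)?, (simp add: Q ptab uu_def vv_def power_int_minus field_simps)?, algebra?)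
lemma good_pinv: "good (pinvI Q)"
  by (rule pe_good[where g="piI Q"], rule pe_pinv)

end


lemma pe_subst: assumes g: "good F" and p: "pe cst F x y" shows "subst F x = y"
proof -
  obtain a b where 1: "b \<noteq> 0" "x = Fract a b" "evG cst F b \<noteq> 0" "y = evG cst F a / evG cst F b"
    using p by (auto simp: pe_def)
  show ?thesis using 1 by (simp add: subst_Fract[OF g] evP_evG)
qed

definition pinv_aut :: "complex \<Rightarrow> rfun \<Rightarrow> rfun" where "pinv_aut Q = subst (pinvI Q)"

context fixes Q :: complex assumes Q: "Q \<noteq> 0"
begin

lemma fh_S0: "fhom (s_aut Q 0)" by (simp add: s_aut_sI good_fhom good_s0[OF Q])
lemma fh_S1: "fhom (s_aut Q 1)" by (simp add: s_aut_sI good_fhom good_s1[OF Q])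
lemma fh_S2: "fhom (s_aut Q 2)" by (simp add: s_aut_sI good_fhom good_s2[OF Q])
lemma fh_P: "fhom (pi_aut Q)" by (simp add: pi_aut_piI good_fhom good_pi[OF Q])
lemma fh_Pi: "fhom (pinv_aut Q)" by (simp add: pinv_aut_def good_fhom good_pinv[OF Q])
lemma fh_W: "fhom (w0_aut Q)" by (simp add: w0_aut_w0I good_fhom good_w0[OF Q])
lemma fh_R: "fhom (r_aut Q)" by (simp add: r_aut_rI good_fhom good_r[OF Q])

lemma S0_var: "s_aut Q 0 (var k) = sI Q 0 k" by (simp add: s_aut_sI good_var good_s0[OF Q])
lemma S1_var: "s_aut Q 1 (var k) = sI Q 1 k" by (simp add: s_aut_sI good_var good_s1[OF Q])
lemma S2_var: "s_aut Q 2 (var k) = sI Q 2 k" by (simp add: s_aut_sI good_var good_s2[OF Q])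
lemma P_var: "pi_aut Q (var k) = piI Q k" by (simp add: pi_aut_piI good_var good_pi[OF Q])
lemma Pi_var: "pinv_aut Q (var k) = pinvI Q k" by (simp add: pinv_aut_def good_var good_pinv[OF Q])
lemma W_var: "w0_aut Q (var k) = w0I Q k" by (simp add: w0_aut_w0I good_var good_w0[OF Q])
lemma R_var: "r_aut Q (var k) = rI Q k" by (simp add: r_aut_rI good_var good_r[OF Q])

lemmas hS0 = fh_add[OF fh_S0] fh_mult[OF fh_S0] fh_diff[OF fh_S0] fh_divide[OF fh_S0] fh_inverse[OF fh_S0] fh_power[OF fh_S0] fh_powi[OF fh_S0] fh_cst[OF fh_S0] fh_uminus[OF fh_S0] fh_0[OF fh_S0] fh_1[OF fh_S0] S0_var
lemmas hS1 = fh_add[OF fh_S1] fh_mult[OF fh_S1] fh_diff[OF fh_S1] fh_divide[OF fh_S1] fh_inverse[OF fh_S1] fh_power[OF fh_S1] fh_powi[OF fh_S1] fh_cst[OF fh_S1] fh_uminus[OF fh_S1] fh_0[OF fh_S1] fh_1[OF fh_S1] S1_var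
lemmas hS2 = fh_add[OF fh_S2] fh_mult[OF fh_S2] fh_diff[OF fh_S2] fh_divide[OF fh_S2] fh_inverse[OF fh_S2] fh_power[OF fh_S2] fh_powi[OF fh_S2] fh_cst[OF fh_S2] fh_uminus[OF fh_S2] fh_0[OF fh_S2] fh_1[OF fh_S2] S2_var
lemmas hP = fh_add[OF fh_P] fh_mult[OF fh_P] fh_diff[OF fh_P] fh_divide[OF fh_P] fh_inverse[OF fh_P] fh_power[OF fh_P] fh_powi[OF fh_P] fh_cst[OF fh_P] fh_uminus[OF fh_P] fh_0[OF fh_P] fh_1[OF fh_P] P_var
lemmas hPi = fh_add[OF fh_Pi] fh_mult[OF fh_Pi] fh_diff[OF fh_Pi] fh_divide[OF fh_Pi] fh_inverse[OF fh_Pi] fh_power[OF fh_Pi] fh_powi[OF fh_Pi] fh_cst[OF fh_Pi] fh_uminus[OF fh_Pi] fh_0[OF fh_Pi] fh_1[OF fh_Pi] Pi_var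
lemmas hW = fh_add[OF fh_W] fh_mult[OF fh_W] fh_diff[OF fh_W] fh_divide[OF fh_W] fh_inverse[OF fh_W] fh_power[OF fh_W] fh_powi[OF fh_W] fh_cst[OF fh_W] fh_uminus[OF fh_W] fh_0[OF fh_W] fh_1[OF fh_W] W_var
lemmas hR = fh_add[OF fh_R] fh_mult[OF fh_R] fh_diff[OF fh_R] fh_divide[OF fh_R] fh_inverse[OF fh_R] fh_power[OF fh_R] fh_powi[OF fh_R] fh_cst[OF fh_R] fh_uminus[OF fh_R] fh_0[OF fh_R] fh_1[OF fh_R] R_var
lemmas hall = hS0 hS1 hS2 hP hPi hW hR
lemmas eq0all = fh_eq0[OF fh_S0] fh_eq0[OF fh_S1] fh_eq0[OF fh_S2] fh_eq0[OF fh_P] fh_eq0[OF fh_Pi] fh_eq0[OF fh_W] fh_eq0[OF fh_R]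
lemmas fhall = fh_S0 fh_S1 fh_S2 fh_P fh_Pi fh_W fh_R
lemmas nzall = tab_nz[OF Q] eq0all var_nz

lemma inv_S0: "s_aut Q 0 \<circ> s_aut Q 0 = id"
  by (rule fhom_ext[OF fhom_comp[OF fh_S0 fh_S0] fhom_id])
     (simp add: S0_var s_aut_sI[symmetric] pe_subst[OF good_s0[OF Q] pe_s0[OF Q], folded s_aut_sI])

lemma inv_S1: "s_aut Q 1 \<circ> s_aut Q 1 = id"
  by (rule fhom_ext[OF fhom_comp[OF fh_S1 fh_S1] fhom_id])
     (simp add: S1_var s_aut_sI[symmetric] pe_subst[OF good_s1[OF Q] pe_s1[OF Q], folded s_aut_sI])
lemma inv_S2: "s_aut Q 2 \<circ> s_aut Q 2 = id"
  by (rule fhom_ext[OF fhom_comp[OF fh_S2 fh_S2] fhom_id])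
     (simp add: S2_var s_aut_sI[symmetric] pe_subst[OF good_s2[OF Q] pe_s2[OF Q], folded s_aut_sI])
lemma inv_W: "w0_aut Q \<circ> w0_aut Q = id"
  by (rule fhom_ext[OF fhom_comp[OF fh_W fh_W] fhom_id])
     (simp add: W_var w0_aut_w0I[symmetric] pe_subst[OF good_w0[OF Q] pe_w0[OF Q], folded w0_aut_w0I])
lemma inv_R: "r_aut Q \<circ> r_aut Q = id"
  by (rule fhom_ext[OF fhom_comp[OF fh_R fh_R] fhom_id])
     (simp add: R_var r_aut_rI[symmetric] pe_subst[OF good_r[OF Q] pe_r[OF Q], folded r_aut_rI])
lemma inv_PiP: "pinv_aut Q \<circ> pi_aut Q = id"
  by (rule fhom_ext[OF fhom_comp[OF fh_Pi fh_P] fhom_id])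
     (simp add: P_var pinv_aut_def[symmetric] pe_subst[OF good_pinv[OF Q] pe_pi[OF Q], folded pinv_aut_def])
lemma inv_PPi: "pi_aut Q \<circ> pinv_aut Q = id"
  by (rule fhom_ext[OF fhom_comp[OF fh_P fh_Pi] fhom_id])
     (simp add: Pi_var pi_aut_piI[symmetric] pe_subst[OF good_pi[OF Q] pe_pinv[OF Q], folded pi_aut_piI])

lemma rel_PS0: "pi_aut Q \<circ> s_aut Q 0 = s_aut Q 1 \<circ> pi_aut Q"
  apply (rule fhom_ext[OF fhom_comp[OF fh_P fh_S0] fhom_comp[OF fh_S1 fh_P]])
  apply (rule nine_all[where P="\<lambda>k. (pi_aut Q \<circ> s_aut Q 0) (var k) = (s_aut Q 1 \<circ> pi_aut Q) (var k)"]; simp only: comp_apply S0_var S1_var S2_var P_var Pi_var W_var R_var, unfold ptab, (simp add: hall nzall Q uu_def vv_def power_int_minus field_simps)?, (simp add: ptab uu_def vv_def Q power_int_minus field_simps)?, algebra?)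
  done

lemma rel_PS1: "pi_aut Q \<circ> s_aut Q 1 = s_aut Q 2 \<circ> pi_aut Q"
  apply (rule fhom_ext[OF fhom_comp[OF fh_P fh_S1] fhom_comp[OF fh_S2 fh_P]])
  apply (rule nine_all[where P="\<lambda>k. (pi_aut Q \<circ> s_aut Q 1) (var k) = (s_aut Q 2 \<circ> pi_aut Q) (var k)"]; simp only: comp_apply S0_var S1_var S2_var P_var Pi_var W_var R_var, unfold ptab, (simp add: hall nzall Q uu_def vv_def power_int_minus field_simps)?, (simp add: ptab uu_def vv_def Q power_int_minus field_simps)?, algebra?)
  done

lemma rel_PS2: "pi_aut Q \<circ> s_aut Q 2 = s_aut Q 0 \<circ> pi_aut Q"
  apply (rule fhom_ext[OF fhom_comp[OF fh_P fh_S2] fhom_comp[OF fh_S0 fh_P]])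
  apply (rule nine_all[where P="\<lambda>k. (pi_aut Q \<circ> s_aut Q 2) (var k) = (s_aut Q 0 \<circ> pi_aut Q) (var k)"]; simp only: comp_apply S0_var S1_var S2_var P_var Pi_var W_var R_var, unfold ptab, (simp add: hall nzall Q uu_def vv_def power_int_minus field_simps)?, (simp add: ptab uu_def vv_def Q power_int_minus field_simps)?, algebra?)
  done

lemma rel_WS0: "w0_aut Q \<circ> s_aut Q 0 = s_aut Q 0 \<circ> w0_aut Q"
  apply (rule fhom_ext[OF fhom_comp[OF fh_W fh_S0] fhom_comp[OF fh_S0 fh_W]])
  apply (rule nine_all[where P="\<lambda>k. (w0_aut Q \<circ> s_aut Q 0) (var k) = (s_aut Q 0 \<circ> w0_aut Q) (var k)"]; simp only: comp_apply S0_var S1_var S2_var P_var Pi_var W_var R_var, unfold ptab, (simp add: hall nzall Q uu_def vv_def power_int_minus field_simps)?, (simp add: ptab uu_def vv_def Q power_int_minus field_simps)?, algebra?)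
  done

lemma rel_WS1: "w0_aut Q \<circ> s_aut Q 1 = s_aut Q 1 \<circ> w0_aut Q"
  apply (rule fhom_ext[OF fhom_comp[OF fh_W fh_S1] fhom_comp[OF fh_S1 fh_W]])
  apply (rule nine_all[where P="\<lambda>k. (w0_aut Q \<circ> s_aut Q 1) (var k) = (s_aut Q 1 \<circ> w0_aut Q) (var k)"]; simp only: comp_apply S0_var S1_var S2_var P_var Pi_var W_var R_var, unfold ptab, (simp add: hall nzall Q uu_def vv_def power_int_minus field_simps)?, (simp add: ptab uu_def vv_def Q power_int_minus field_simps)?, algebra?)
  done

lemma rel_WS2: "w0_aut Q \<circ> s_aut Q 2 = s_aut Q 2 \<circ> w0_aut Q"
  apply (rule fhom_ext[OF fhom_comp[OF fh_W fh_S2] fhom_comp[OF fh_S2 fh_W]])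
  apply (rule nine_all[where P="\<lambda>k. (w0_aut Q \<circ> s_aut Q 2) (var k) = (s_aut Q 2 \<circ> w0_aut Q) (var k)"]; simp only: comp_apply S0_var S1_var S2_var P_var Pi_var W_var R_var, unfold ptab, (simp add: hall nzall Q uu_def vv_def power_int_minus field_simps)?, (simp add: ptab uu_def vv_def Q power_int_minus field_simps)?, algebra?)
  done

lemma rel_WP: "w0_aut Q \<circ> pi_aut Q = pi_aut Q \<circ> w0_aut Q"
  apply (rule fhom_ext[OF fhom_comp[OF fh_W fh_P] fhom_comp[OF fh_P fh_W]])
  apply (rule nine_all[where P="\<lambda>k. (w0_aut Q \<circ> pi_aut Q) (var k) = (pi_aut Q \<circ> w0_aut Q) (var k)"]; simp only: comp_apply S0_var S1_var S2_var P_var Pi_var W_var R_var, unfold ptab, (simp add: hall nzall Q uu_def vv_def power_int_minus field_simps)?, (simp add: ptab uu_def vv_def Q power_int_minus field_simps)?, algebra?)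
  done

lemma rel_RS0: "r_aut Q \<circ> s_aut Q 0 = s_aut Q 0 \<circ> r_aut Q"
  apply (rule fhom_ext[OF fhom_comp[OF fh_R fh_S0] fhom_comp[OF fh_S0 fh_R]])
  apply (rule nine_all[where P="\<lambda>k. (r_aut Q \<circ> s_aut Q 0) (var k) = (s_aut Q 0 \<circ> r_aut Q) (var k)"]; simp only: comp_apply S0_var S1_var S2_var P_var Pi_var W_var R_var, unfold ptab, (simp add: hall nzall Q uu_def vv_def power_int_minus field_simps)?, (simp add: ptab uu_def vv_def Q power_int_minus field_simps)?, algebra?)
  done

lemma rel_RS1: "r_aut Q \<circ> s_aut Q 1 = s_aut Q 1 \<circ> r_aut Q"
  apply (rule fhom_ext[OF fhom_comp[OF fh_R fh_S1] fhom_comp[OF fh_S1 fh_R]])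
  apply (rule nine_all[where P="\<lambda>k. (r_aut Q \<circ> s_aut Q 1) (var k) = (s_aut Q 1 \<circ> r_aut Q) (var k)"]; simp only: comp_apply S0_var S1_var S2_var P_var Pi_var W_var R_var, unfold ptab, (simp add: hall nzall Q uu_def vv_def power_int_minus field_simps)?, (simp add: ptab uu_def vv_def Q power_int_minus field_simps)?, algebra?)
  done

lemma rel_RS2: "r_aut Q \<circ> s_aut Q 2 = s_aut Q 2 \<circ> r_aut Q"
  apply (rule fhom_ext[OF fhom_comp[OF fh_R fh_S2] fhom_comp[OF fh_S2 fh_R]])
  apply (rule nine_all[where P="\<lambda>k. (r_aut Q \<circ> s_aut Q 2) (var k) = (s_aut Q 2 \<circ> r_aut Q) (var k)"]; simp only: comp_apply S0_var S1_var S2_var P_var Pi_var W_var R_var, unfold ptab, (simp add: hall nzall Q uu_def vv_def power_int_minus field_simps)?, (simp add: ptab uu_def vv_def Q power_int_minus field_simps)?, algebra?)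
  done

lemma rel_RP: "r_aut Q \<circ> pi_aut Q = pi_aut Q \<circ> r_aut Q"
  apply (rule fhom_ext[OF fhom_comp[OF fh_R fh_P] fhom_comp[OF fh_P fh_R]])
  apply (rule nine_all[where P="\<lambda>k. (r_aut Q \<circ> pi_aut Q) (var k) = (pi_aut Q \<circ> r_aut Q) (var k)"]; simp only: comp_apply S0_var S1_var S2_var P_var Pi_var W_var R_var, unfold ptab, (simp add: hall nzall Q uu_def vv_def power_int_minus field_simps)?, (simp add: ptab uu_def vv_def Q power_int_minus field_simps)?, algebra?)
  done

lemma braid: "s_aut Q 0 \<circ> s_aut Q 1 \<circ> s_aut Q 0 = s_aut Q 1 \<circ> s_aut Q 0 \<circ> s_aut Q 1"
  apply (rule fhom_ext[OF fhom_comp[OF fhom_comp[OF fh_S0 fh_S1] fh_S0] fhom_comp[OF fhom_comp[OF fh_S1 fh_S0] fh_S1]])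
  apply (rule nine_all[where P="\<lambda>k. (s_aut Q 0 \<circ> s_aut Q 1 \<circ> s_aut Q 0) (var k) = (s_aut Q 1 \<circ> s_aut Q 0 \<circ> s_aut Q 1) (var k)"]; simp only: comp_apply S0_var S1_var S2_var P_var Pi_var W_var R_var, unfold ptab, (simp add: hall nzall Q uu_def vv_def power_int_minus field_simps)?, (unfold ptab)?, (simp add: hall nzall Q uu_def vv_def power_int_minus field_simps)?, (simp add: ptab uu_def vv_def Q power_int_minus field_simps)?, algebra?)
  done

end


definition zp :: "('a \<Rightarrow> 'a) \<Rightarrow> ('a \<Rightarrow> 'a) \<Rightarrow> int \<Rightarrow> 'a \<Rightarrow> 'a" where
  "zp f g n = (if 0 \<le> n then f ^^ nat n else g ^^ nat (- n))"

lemma zpow_zp: "f \<circ> g = id \<Longrightarrow> g \<circ> f = id \<Longrightarrow> zpow f n = zp f g n"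
  using inv_unique_comp[of f g] by (simp add: zpow_def zp_def)

context fixes f g :: "'a \<Rightarrow> 'a" assumes fg: "f \<circ> g = id" and gf: "g \<circ> f = id"
begin

lemma zp_0: "zp f g 0 = id" by (simp add: zp_def)

lemma zp_succ: "zp f g (n+1) = f \<circ> zp f g n"
proof (cases "0 \<le> n")
  case True
  then have "nat (n+1) = Suc (nat n)" by simp
  then show ?thesis using True by (simp add: zp_def)
next
  case False
  then have e: "nat (-n) = Suc (nat (-(n+1)))" by simp
  show ?thesis
  proof (cases "n = -1")
    case True then show ?thesis using fg by (simp add: zp_def)
  next
    case False
    then have "\<not> 0 \<le> n + 1" using \<open>\<not> 0 \<le> n\<close> by simp
    have 1: "zp f g n = g \<circ> g ^^ nat (-(n+1))" using \<open>\<not> 0 \<le> n\<close> e by (simp add: zp_def)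
    have 2: "zp f g (n+1) = g ^^ nat (-(n+1))" using \<open>\<not> 0 \<le> n + 1\<close> by (simp add: zp_def)
    show ?thesis unfolding 1 2 by (simp add: comp_assoc[symmetric] fg)
  qed
qed

lemma zp_pred: "zp f g (n-1) = g \<circ> zp f g n"
proof -
  have "zp f g n = f \<circ> zp f g (n-1)" using zp_succ[of "n-1"] by simp
  then have "g \<circ> zp f g n = (g \<circ> f) \<circ> zp f g (n-1)" by (simp add: comp_assoc)
  then show ?thesis using gf by simp
qed

lemma zp_add: "zp f g (a+b) = zp f g a \<circ> zp f g b"
proof (induction a rule: int_induct[where k=0])
  case base then show ?case by (simp add: zp_0)
next
  case (step1 i)
  have "zp f g (i + 1 + b) = zp f g ((i+b)+1)" by (simp add: ac_simps)
  also have "\<dots> = f \<circ> zp f g (i+b)" by (rule zp_succ)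
  also have "\<dots> = zp f g (i+1) \<circ> zp f g b" using step1 by (metis zp_succ comp_assoc)
  finally show ?case .
next
  case (step2 i)
  have "zp f g (i - 1 + b) = zp f g ((i+b)-1)" by (rule arg_cong[where f="zp f g"]) simp
  also have "\<dots> = g \<circ> zp f g (i+b)" by (rule zp_pred)
  also have "\<dots> = zp f g (i-1) \<circ> zp f g b" using step2 by (metis zp_pred comp_assoc)
  finally show ?case .
qed

lemma zp_comm: assumes hf: "h \<circ> f = f \<circ> h" and hg: "h \<circ> g = g \<circ> h"
  shows "h \<circ> zp f g n = zp f g n \<circ> h"
proof (induction n rule: int_induct[where k=0])
  case base then show ?case by (simp add: zp_0)
next
  case (step1 i)
  have "h \<circ> zp f g (i+1) = (h \<circ> f) \<circ> zp f g i" by (simp add: zp_succ comp_assoc)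
  also have "\<dots> = f \<circ> (h \<circ> zp f g i)" by (simp add: hf comp_assoc)
  also have "\<dots> = zp f g (i+1) \<circ> h" using step1 by (metis zp_succ comp_assoc)
  finally show ?case .
next
  case (step2 i)
  have "h \<circ> zp f g (i-1) = (h \<circ> g) \<circ> zp f g i" by (simp add: zp_pred comp_assoc)
  also have "\<dots> = g \<circ> (h \<circ> zp f g i)" by (simp add: hg comp_assoc)
  also have "\<dots> = zp f g (i-1) \<circ> h" using step2 by (metis zp_pred comp_assoc)
  finally show ?case .
qed

lemma zp_1: "zp f g 1 = f" and zp_m1: "zp f g (-1) = g"
  by (simp_all add: zp_def)

lemma zp_induct: assumes "P id" "\<And>h. P h \<Longrightarrow> P (f \<circ> h)" "\<And>h. P h \<Longrightarrow> P (g \<circ> h)"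
  shows "P (zp f g n)"
proof (induction n rule: int_induct[where k=0])
  case base then show ?case using assms(1) by (simp only: zp_0)
next
  case (step1 i) then show ?case using assms(2) by (simp only: zp_succ)
next
  case (step2 i) then show ?case using assms(3) by (simp only: zp_pred)
qed

end

lemma comm_inv: "f \<circ> g = id \<Longrightarrow> g \<circ> f = id \<Longrightarrow> h \<circ> f = f \<circ> h \<Longrightarrow> h \<circ> g = g \<circ> h"
  by (metis comp_assoc comp_id id_comp)


lemma zp_zp_comm:
  assumes f1: "f1 \<circ> g1 = id" "g1 \<circ> f1 = id" and f2: "f2 \<circ> g2 = id" "g2 \<circ> f2 = id"
    and c: "f1 \<circ> f2 = f2 \<circ> f1"
  shows "zp f1 g1 a \<circ> zp f2 g2 b = zp f2 g2 b \<circ> zp f1 g1 a"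
proof -
  have c1: "f2 \<circ> g1 = g1 \<circ> f2" by (rule comm_inv[OF f1]) (use c in simp)
  have c2: "g2 \<circ> f1 = f1 \<circ> g2" using comm_inv[OF f2, of f1] c by metis
  have c3: "g2 \<circ> g1 = g1 \<circ> g2" by (rule comm_inv[OF f1 c2])
  have "f2 \<circ> zp f1 g1 a = zp f1 g1 a \<circ> f2" by (rule zp_comm[OF f1]) (use c c1 in simp_all)
  moreover have "g2 \<circ> zp f1 g1 a = zp f1 g1 a \<circ> g2" by (rule zp_comm[OF f1 c2 c3])
  ultimately have "zp f1 g1 a \<circ> zp f2 g2 b = zp f2 g2 b \<circ> zp f1 g1 a"
    by (intro zp_comm[OF f2]; simp)
  then show ?thesis .
qed

lemma zp_fhom: assumes "f \<circ> g = id" "g \<circ> f = id" "fhom f" "fhom g" shows "fhom (zp f g n)"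
  apply (rule zp_induct[OF assms(1,2)])
    apply (rule fhom_id)
   apply (rule fhom_comp[OF assms(3)], assumption)
  apply (rule fhom_comp[OF assms(4)], assumption)
  done

lemma zp_scale:
  assumes fg: "f \<circ> g = id" "g \<circ> f = id" and hf: "fhom f" "fhom g"
    and c: "c \<noteq> 0" "f c = c" "g c = c" and x: "f x = c * x" "g x = inverse c * x"
  shows "zp f g n x = c powi n * x"
proof (induction n rule: int_induct[where k=0])
  case base then show ?case by (simp add: zp_0[OF fg])
next
  case (step1 i)
  have "zp f g (i+1) x = f (c powi i * x)" using step1 by (simp add: zp_succ[OF fg])
  also have "\<dots> = c powi (i+1) * x"
    using c x by (simp add: fh_mult[OF hf(1)] fh_powi[OF hf(1)] power_int_add)
  finally show ?case .
next
  case (step2 i)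
  have "zp f g (i-1) x = g (c powi i * x)" using step2 by (simp add: zp_pred[OF fg])
  also have "\<dots> = c powi (i-1) * x"
    using c x by (simp add: fh_mult[OF hf(2)] fh_powi[OF hf(2)] power_int_diff field_simps)
  finally show ?case .
qed

lemma crule: "A \<circ> B = C \<circ> D \<Longrightarrow> A \<circ> (B \<circ> f) = C \<circ> (D \<circ> f)"
  by (metis comp_assoc)
lemma crule3: "A \<circ> (B \<circ> C) = D \<circ> (E \<circ> F) \<Longrightarrow> A \<circ> (B \<circ> (C \<circ> f)) = D \<circ> (E \<circ> (F \<circ> f))"
  by (metis comp_assoc)
lemma crule_id: "A \<circ> B = id \<Longrightarrow> A \<circ> (B \<circ> f) = f"
  by (metis comp_assoc id_comp)

context fixes Q :: complex assumes Q: "Q \<noteq> 0"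
begin

abbreviation "S0 \<equiv> s_aut Q 0"
abbreviation "S1 \<equiv> s_aut Q 1"
abbreviation "S2 \<equiv> s_aut Q 2"
abbreviation "PP \<equiv> pi_aut Q"
abbreviation "PI \<equiv> pinv_aut Q"
abbreviation "WW \<equiv> w0_aut Q"
abbreviation "RR \<equiv> r_aut Q"

lemma braid': "S1 \<circ> (S0 \<circ> S1) = S0 \<circ> (S1 \<circ> S0)"
  using braid[OF Q] by (simp add: comp_assoc)

lemmas grp0 = inv_S0[OF Q] inv_S1[OF Q] inv_S2[OF Q] inv_W[OF Q] inv_R[OF Q] inv_PiP[OF Q] inv_PPi[OF Q]
lemmas grp1 = rel_PS0[OF Q] rel_PS1[OF Q] rel_PS2[OF Q]
lemmas grpc = rel_WS0[OF Q, symmetric] rel_WS1[OF Q, symmetric] rel_WS2[OF Q, symmetric] rel_WP[OF Q, symmetric]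
   rel_RS0[OF Q, symmetric] rel_RS1[OF Q, symmetric] rel_RS2[OF Q, symmetric] rel_RP[OF Q, symmetric]
lemma PIS: "PI \<circ> S1 = S0 \<circ> PI" "PI \<circ> S2 = S1 \<circ> PI" "PI \<circ> S0 = S2 \<circ> PI"
proof -
  have "PI \<circ> S1 = PI \<circ> S1 \<circ> (PP \<circ> PI)" by (simp add: inv_PPi[OF Q])
  also have "\<dots> = PI \<circ> (PP \<circ> S0) \<circ> PI" by (simp add: rel_PS0[OF Q] comp_assoc)
  also have "\<dots> = S0 \<circ> PI" by (simp add: comp_assoc[symmetric] inv_PiP[OF Q])
  finally show "PI \<circ> S1 = S0 \<circ> PI" .
  have "PI \<circ> S2 = PI \<circ> S2 \<circ> (PP \<circ> PI)" by (simp add: inv_PPi[OF Q])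
  also have "\<dots> = PI \<circ> (PP \<circ> S1) \<circ> PI" by (simp add: rel_PS1[OF Q] comp_assoc)
  also have "\<dots> = S1 \<circ> PI" by (simp add: comp_assoc[symmetric] inv_PiP[OF Q])
  finally show "PI \<circ> S2 = S1 \<circ> PI" .
  have "PI \<circ> S0 = PI \<circ> S0 \<circ> (PP \<circ> PI)" by (simp add: inv_PPi[OF Q])
  also have "\<dots> = PI \<circ> (PP \<circ> S2) \<circ> PI" by (simp add: rel_PS2[OF Q] comp_assoc)
  also have "\<dots> = S2 \<circ> PI" by (simp add: comp_assoc[symmetric] inv_PiP[OF Q])
  finally show "PI \<circ> S0 = S2 \<circ> PI" .
qed

lemmas grp = PIS PIS[THEN crule] grp0 grp0[THEN crule_id] grp1 grp1[THEN crule] braid' braid'[THEN crule3] comp_assoc id_comp comp_id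
lemmas grpC = grp grpc grpc[THEN crule]

lemma T12: "T1 Q \<circ> T2 Q = T2 Q \<circ> T1 Q"
proof -
  have "T1 Q \<circ> T2 Q = S0 \<circ> (S1 \<circ> (PP \<circ> PP))" by (simp add: T1_def T2_def grp)
  moreover have "T2 Q \<circ> T1 Q = S0 \<circ> (S1 \<circ> (PP \<circ> PP))" by (simp add: T1_def T2_def grp)
  ultimately show ?thesis by simp
qed

lemma T14: "T1 Q \<circ> T4 Q = T4 Q \<circ> T1 Q"
  by (simp add: T1_def T4_def grpC)
lemma T24: "T2 Q \<circ> T4 Q = T4 Q \<circ> T2 Q"
  by (simp add: T2_def T4_def grpC)


end

definition "T1i Q = s_aut Q 1 \<circ> s_aut Q 2 \<circ> pinv_aut Q"
definition "T2i Q = s_aut Q 2 \<circ> pinv_aut Q \<circ> s_aut Q 1"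
definition "T4i Q = w0_aut Q \<circ> r_aut Q"
definition HH :: "complex \<Rightarrow> int \<Rightarrow> int \<Rightarrow> int \<Rightarrow> rfun \<Rightarrow> rfun" where "HH Q n m N = zp (T1 Q) (T1i Q) n \<circ> zp (T2 Q) (T2i Q) m \<circ> zp (T4 Q) (T4i Q) N"

context fixes Q :: complex assumes Q: "Q \<noteq> 0"
begin

lemma T1inv: "T1 Q \<circ> T1i Q = id" "T1i Q \<circ> T1 Q = id"
  by (simp_all add: T1_def T1i_def grp[OF Q])
lemma T2inv: "T2 Q \<circ> T2i Q = id" "T2i Q \<circ> T2 Q = id"
  by (simp_all add: T2_def T2i_def grp[OF Q])
lemma T4inv: "T4 Q \<circ> T4i Q = id" "T4i Q \<circ> T4 Q = id"
  by (simp_all add: T4_def T4i_def grp[OF Q])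

lemma fh_T: "fhom (T1 Q)" "fhom (T1i Q)" "fhom (T2 Q)" "fhom (T2i Q)" "fhom (T4 Q)" "fhom (T4i Q)"
  by (simp_all add: T1_def T1i_def T2_def T2i_def T4_def T4i_def fhom_comp fhall[OF Q])

lemma tauNM_HH: "tauNM Q n m N = HH Q n m N (var 4)"
  by (simp add: tauNM_def HH_def zpow_zp[OF T1inv] zpow_zp[OF T2inv] zpow_zp[OF T4inv] tau_def)

lemma fh_HH: "fhom (HH Q n m N)"
  unfolding HH_def
  by (intro fhom_comp zp_fhom T1inv T2inv T4inv fh_T)

lemma HH_comp: "HH Q n m N \<circ> HH Q a b c = HH Q (n+a) (m+b) (N+c)"
proof -
  have c12: "zp (T2 Q) (T2i Q) m \<circ> zp (T1 Q) (T1i Q) a = zp (T1 Q) (T1i Q) a \<circ> zp (T2 Q) (T2i Q) m"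
    by (rule zp_zp_comm[OF T1inv T2inv T12[OF Q], symmetric])
  have c14: "zp (T4 Q) (T4i Q) N \<circ> zp (T1 Q) (T1i Q) a = zp (T1 Q) (T1i Q) a \<circ> zp (T4 Q) (T4i Q) N"
    by (rule zp_zp_comm[OF T1inv T4inv T14[OF Q], symmetric])
  have c24: "zp (T4 Q) (T4i Q) N \<circ> zp (T2 Q) (T2i Q) b = zp (T2 Q) (T2i Q) b \<circ> zp (T4 Q) (T4i Q) N"
    by (rule zp_zp_comm[OF T2inv T4inv T24[OF Q], symmetric])
  show ?thesis
    unfolding HH_def zp_add[OF T1inv] zp_add[OF T2inv] zp_add[OF T4inv]
    by (simp add: comp_assoc crule[OF c12] crule[OF c14] crule[OF c24] c24)
qed

lemma HH_tau: "HH Q n m N (tauNM Q a b c) = tauNM Q (n+a) (m+b) (N+c)"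
  using HH_comp[of n m N a b c] by (simp add: tauNM_HH comp_def fun_eq_iff)

end

context fixes Q :: complex assumes Q: "Q \<noteq> 0"
begin

lemma T1_v: "T1 Q (var 0) = cst Q * var 0" "T1i Q (var 0) = inverse (cst Q) * var 0"
  "T1 Q (var 1) = inverse (cst Q) * var 1" "T1i Q (var 1) = inverse (inverse (cst Q)) * var 1"
  "T2 Q (var 0) = 1 * var 0" "T2i Q (var 0) = inverse 1 * var 0"
  "T2 Q (var 1) = cst Q * var 1" "T2i Q (var 1) = inverse (cst Q) * var 1"
  "T4 Q (var 0) = 1 * var 0" "T4i Q (var 0) = inverse 1 * var 0"
  "T4 Q (var 1) = 1 * var 1" "T4i Q (var 1) = inverse 1 * var 1"
  by (simp_all add: T1_def T1i_def T2_def T2i_def T4_def T4i_def hall[OF Q] ptab Q field_simps)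

lemma fT: "fhom (T1 Q)" "fhom (T1i Q)" "fhom (T2 Q)" "fhom (T2i Q)" "fhom (T4 Q)" "fhom (T4i Q)"
  by (rule fh_T[OF Q])+

lemma zsc1: "zp (T1 Q) (T1i Q) n (var 0) = cst Q powi n * var 0"
  by (rule zp_scale[OF T1inv[OF Q] fT(1,2)]) (simp_all add: Q T1_v fh_cst[OF fT(1)] fh_cst[OF fT(2)])
lemma zsc2: "zp (T1 Q) (T1i Q) n (var 1) = inverse (cst Q) powi n * var 1"
  by (rule zp_scale[OF T1inv[OF Q] fT(1,2)]) (simp_all add: Q T1_v fh_cst[OF fT(1)] fh_cst[OF fT(2)] fh_inverse[OF fT(1)] fh_inverse[OF fT(2)])
lemma zsc3: "zp (T2 Q) (T2i Q) n (var 0) = 1 powi n * var 0"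
  by (rule zp_scale[OF T2inv[OF Q] fT(3,4)]) (simp_all add: T1_v fh_1[OF fT(3)] fh_1[OF fT(4)] del: mult_1)
lemma zsc4: "zp (T2 Q) (T2i Q) n (var 1) = cst Q powi n * var 1"
  by (rule zp_scale[OF T2inv[OF Q] fT(3,4)]) (simp_all add: Q T1_v fh_cst[OF fT(3)] fh_cst[OF fT(4)])
lemma zsc5: "zp (T4 Q) (T4i Q) n (var 0) = 1 powi n * var 0"
  by (rule zp_scale[OF T4inv[OF Q] fT(5,6)]) (simp_all add: T1_v fh_1[OF fT(5)] fh_1[OF fT(6)] del: mult_1)
lemma zsc6: "zp (T4 Q) (T4i Q) n (var 1) = 1 powi n * var 1"
  by (rule zp_scale[OF T4inv[OF Q] fT(5,6)]) (simp_all add: T1_v fh_1[OF fT(5)] fh_1[OF fT(6)] del: mult_1)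

lemma zpfh: "fhom (zp (T1 Q) (T1i Q) n)" "fhom (zp (T2 Q) (T2i Q) n)" "fhom (zp (T4 Q) (T4i Q) n)"
  by (rule zp_fhom; (rule T1inv[OF Q] T2inv[OF Q] T4inv[OF Q] fT)?)+

lemma HH_a0: "HH Q n m N (var 0) = cst Q powi n * var 0"
  by (simp add: HH_def zsc1 zsc3 zsc5)
lemma HH_a1: "HH Q n m N (var 1) = cst Q powi (m - n) * var 1"
  by (simp add: HH_def zsc2 zsc4 zsc6 fh_mult[OF zpfh(1)] fh_powi[OF zpfh(1)] fh_cst[OF zpfh(1)]
       power_int_inverse[symmetric] power_int_diff Q field_simps)

end

context fixes Q :: complex assumes Q: "Q \<noteq> 0"
begin

lemma T12i: "T1i Q \<circ> T2i Q = pinv_aut Q \<circ> pinv_aut Q \<circ> s_aut Q 1 \<circ> s_aut Q 0"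
proof -
  have XY: "(pinv_aut Q \<circ> pinv_aut Q \<circ> s_aut Q 1 \<circ> s_aut Q 0) \<circ> (T2 Q \<circ> T1 Q) = id"
    by (simp add: T1_def T2_def grp[OF Q])
  have YZ: "(T2 Q \<circ> T1 Q) \<circ> (T1i Q \<circ> T2i Q) = id"
    by (simp add: T1_def T2_def T1i_def T2i_def grp[OF Q])
  have "T1i Q \<circ> T2i Q = ((pinv_aut Q \<circ> pinv_aut Q \<circ> s_aut Q 1 \<circ> s_aut Q 0) \<circ> (T2 Q \<circ> T1 Q)) \<circ> (T1i Q \<circ> T2i Q)"
    using XY by simp
  also have "\<dots> = (pinv_aut Q \<circ> pinv_aut Q \<circ> s_aut Q 1 \<circ> s_aut Q 0) \<circ> ((T2 Q \<circ> T1 Q) \<circ> (T1i Q \<circ> T2i Q))"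
    by (simp add: comp_assoc)
  finally show ?thesis using YZ by simp
qed

lemma T12': "T1 Q \<circ> T2 Q = s_aut Q 0 \<circ> (s_aut Q 1 \<circ> (pi_aut Q \<circ> pi_aut Q))"
  by (simp add: T1_def T2_def grp[OF Q])

lemma T12'a: "T1 Q (T2 Q x) = s_aut Q 0 (s_aut Q 1 (pi_aut Q (pi_aut Q x)))"
  using fun_cong[OF T12', of x] by simp
lemma T12ia: "T1i Q (T2i Q x) = pinv_aut Q (pinv_aut Q (s_aut Q 1 (s_aut Q 0 x)))"
  using fun_cong[OF T12i, of x] by simp

lemmas zpsimp = zp_0[OF T1inv[OF Q]] zp_1[OF T1inv[OF Q]] zp_m1[OF T1inv[OF Q]]
  zp_0[OF T2inv[OF Q]] zp_1[OF T2inv[OF Q]] zp_m1[OF T2inv[OF Q]]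
  zp_0[OF T4inv[OF Q]] zp_1[OF T4inv[OF Q]] zp_m1[OF T4inv[OF Q]]

lemma tau_base0: "tauNM Q 0 0 1 = var 7"
  by (simp add: tauNM_HH[OF Q] HH_def zpsimp) (simp add: T4_def W_var[OF Q] R_var[OF Q] ptab)

lemma tau_base1: "tauNM Q 0 0 (-1) = w0I Q 7"
  by (simp add: tauNM_HH[OF Q] HH_def zpsimp) (simp add: T4i_def W_var[OF Q] R_var[OF Q] ptab)

lemma tau_base2: "tauNM Q 1 1 0 = sI Q 0 3"
  by (simp add: tauNM_HH[OF Q] HH_def zpsimp) (simp add: T12'a S0_var[OF Q] S1_var[OF Q] P_var[OF Q] ptab)

lemma tau_base3: "tauNM Q (-1) (-1) 0 = pinv_aut Q (pinv_aut Q (sI Q 1 4))"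
  by (simp add: tauNM_HH[OF Q] HH_def zpsimp) (simp add: T12ia S0_var[OF Q] S1_var[OF Q] sI0)

lemma tau_base4: "tauNM Q 0 1 0 = var 5"
  by (simp add: tauNM_HH[OF Q] HH_def zpsimp) (simp add: T2_def S1_var[OF Q] S2_var[OF Q] P_var[OF Q] ptab)

lemma tau_base5: "tauNM Q 0 (-1) 0 = s_aut Q 2 (pinv_aut Q (sI Q 1 4))"
  by (simp add: tauNM_HH[OF Q] HH_def zpsimp) (simp add: T2i_def S1_var[OF Q] S2_var[OF Q] ptab)

lemma tau_base6: "tauNM Q 1 0 0 = pi_aut Q (s_aut Q 2 (sI Q 1 4))"
  by (simp add: tauNM_HH[OF Q] HH_def zpsimp) (simp add: T1_def S1_var[OF Q] S2_var[OF Q] ptab)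

lemma tau_base7: "tauNM Q (-1) 0 0 = var 3"
  by (simp add: tauNM_HH[OF Q] HH_def zpsimp) (simp add: T1i_def S1_var[OF Q] S2_var[OF Q] Pi_var[OF Q] ptab)

end

context fixes Q :: complex assumes Q: "Q \<noteq> 0"
begin

lemma base1: "(1 - alpha Q 2 ^ 12) * var 7 * w0I Q 7
   + alpha Q 0 * alpha Q 2 ^ 11 * sI Q 0 3 * pinv_aut Q (pinv_aut Q (sI Q 1 4))
   - alpha Q 0 * alpha Q 2 ^ 2 * var 5 * s_aut Q 2 (pinv_aut Q (sI Q 1 4)) = 0"
  apply (unfold sI1)
  apply (simp add: hall[OF Q] pinvI_tab piI_tab nzall[OF Q] Q uu_def vv_def power_int_minus field_simps)
  apply (unfold ptab)
  apply (simp add: hall[OF Q] nzall[OF Q] Q uu_def vv_def power_int_minus field_simps)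
  apply (simp add: ptab uu_def vv_def Q power_int_minus field_simps)?
  apply algebra
  done

lemma base2: "(1 - alpha Q 0 ^ 12) * var 7 * w0I Q 7
   + alpha Q 0 ^ 10 * alpha Q 2 powi (-1) * pi_aut Q (s_aut Q 2 (sI Q 1 4)) * var 3
   - alpha Q 0 * alpha Q 2 powi (-1) * sI Q 0 3 * pinv_aut Q (pinv_aut Q (sI Q 1 4)) = 0"
  apply (unfold sI1)
  apply (simp add: hall[OF Q] pinvI_tab piI_tab nzall[OF Q] Q uu_def vv_def power_int_minus field_simps)
  apply (unfold ptab)
  apply (simp add: hall[OF Q] nzall[OF Q] Q uu_def vv_def power_int_minus field_simps)
  apply (simp add: ptab uu_def vv_def Q power_int_minus field_simps)?
  apply algebra
  done

lemma base3: "(1 - alpha Q 0 ^ 12 * alpha Q 2 ^ 12) * var 7 * w0I Q 7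
   + alpha Q 0 ^ 10 * alpha Q 2 ^ 11 * pi_aut Q (s_aut Q 2 (sI Q 1 4)) * var 3
   - alpha Q 0 * alpha Q 2 ^ 2 * var 5 * s_aut Q 2 (pinv_aut Q (sI Q 1 4)) = 0"
  apply (unfold sI1)
  apply (simp add: hall[OF Q] pinvI_tab piI_tab nzall[OF Q] Q uu_def vv_def power_int_minus field_simps)
  apply (unfold ptab)
  apply (simp add: hall[OF Q] nzall[OF Q] Q uu_def vv_def power_int_minus field_simps)
  apply (simp add: ptab uu_def vv_def Q power_int_minus field_simps)?
  apply algebra
  done

end

lemma pw: "(c::'a::field) \<noteq> 0 \<Longrightarrow> c powi (numeral k * m) = (c powi m) ^ numeral k"
  by (metis mult.commute power_int_mult power_int_numeral)

lemma pw2: "(c::'a::field) \<noteq> 0 \<Longrightarrow> c powi (m * numeral k) = (c powi m) ^ numeral k"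
  by (metis power_int_mult power_int_numeral)

context fixes Q :: complex assumes Q: "Q \<noteq> 0"
begin

lemma base1': "(1 - alpha Q 2 ^ 12) * tauNM Q 0 0 1 * tauNM Q 0 0 (-1)
   + alpha Q 0 * alpha Q 2 ^ 11 * tauNM Q 1 1 0 * tauNM Q (-1) (-1) 0
   - alpha Q 0 * alpha Q 2 ^ 2 * tauNM Q 0 1 0 * tauNM Q 0 (-1) 0 = 0"
  by (simp only: tau_base0[OF Q] tau_base1[OF Q] tau_base2[OF Q] tau_base3[OF Q] tau_base4[OF Q]
     tau_base5[OF Q] tau_base6[OF Q] tau_base7[OF Q] base1[OF Q])
lemma base2': "(1 - alpha Q 0 ^ 12) * tauNM Q 0 0 1 * tauNM Q 0 0 (-1)
   + alpha Q 0 ^ 10 * alpha Q 2 powi (-1) * tauNM Q 1 0 0 * tauNM Q (-1) 0 0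
   - alpha Q 0 * alpha Q 2 powi (-1) * tauNM Q 1 1 0 * tauNM Q (-1) (-1) 0 = 0"
  by (simp only: tau_base0[OF Q] tau_base1[OF Q] tau_base2[OF Q] tau_base3[OF Q] tau_base4[OF Q]
     tau_base5[OF Q] tau_base6[OF Q] tau_base7[OF Q] base2[OF Q])
lemma base3': "(1 - alpha Q 0 ^ 12 * alpha Q 2 ^ 12) * tauNM Q 0 0 1 * tauNM Q 0 0 (-1)
   + alpha Q 0 ^ 10 * alpha Q 2 ^ 11 * tauNM Q 1 0 0 * tauNM Q (-1) 0 0
   - alpha Q 0 * alpha Q 2 ^ 2 * tauNM Q 0 1 0 * tauNM Q 0 (-1) 0 = 0"
  by (simp only: tau_base0[OF Q] tau_base1[OF Q] tau_base2[OF Q] tau_base3[OF Q] tau_base4[OF Q]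
     tau_base5[OF Q] tau_base6[OF Q] tau_base7[OF Q] base3[OF Q])

lemma HA0: "HH Q n m N (alpha Q 0) = cst Q powi n * alpha Q 0"
  by (simp add: HH_a0[OF Q])
lemma HA2: "HH Q n m N (alpha Q 2) = inverse (cst Q powi m) * alpha Q 2"
  by (simp add: HH_a0[OF Q] HH_a1[OF Q] fh_mult[OF fh_HH[OF Q]] fh_inverse[OF fh_HH[OF Q]] fh_divide[OF fh_HH[OF Q]]
     fh_cst[OF fh_HH[OF Q]] power_int_diff Q field_simps)

lemma HHs: "fhom (HH Q n m N)" by (rule fh_HH[OF Q])

end

lemma coef: assumes Q: "(Q::complex) \<noteq> 0" shows
  "cst Q powi (-12*m) = inverse (cst Q powi m) ^ 12"
  "cst Q powi (n - 11*m) = cst Q powi n * inverse (cst Q powi m) ^ 11"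
  "cst Q powi (n - 2*m) = cst Q powi n * inverse (cst Q powi m) ^ 2"
  "cst Q powi (12*n) = (cst Q powi n) ^ 12"
  "cst Q powi (10*n + m) = (cst Q powi n) ^ 10 * cst Q powi m"
  "cst Q powi (n + m) = cst Q powi n * cst Q powi m"
  "cst Q powi (12*n - 12*m) = (cst Q powi n) ^ 12 * inverse (cst Q powi m) ^ 12"
  "cst Q powi (10*n - 11*m) = (cst Q powi n) ^ 10 * inverse (cst Q powi m) ^ 11"
proof -
  have c: "cst Q \<noteq> 0" using Q by simp
  show "cst Q powi (-12*m) = inverse (cst Q powi m) ^ 12"
    using c by (simp add: pw[OF c] power_int_minus power_inverse)
  show "cst Q powi (n - 11*m) = cst Q powi n * inverse (cst Q powi m) ^ 11"
    using c by (simp add: pw[OF c] power_int_diff power_inverse divide_inverse)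
  show "cst Q powi (n - 2*m) = cst Q powi n * inverse (cst Q powi m) ^ 2"
    using c by (simp add: pw[OF c] power_int_diff power_inverse divide_inverse)
  show "cst Q powi (12*n) = (cst Q powi n) ^ 12"
    using c by (simp add: pw[OF c])
  show "cst Q powi (10*n + m) = (cst Q powi n) ^ 10 * cst Q powi m"
    using c by (simp add: pw[OF c] power_int_add)
  show "cst Q powi (n + m) = cst Q powi n * cst Q powi m"
    using c by (simp add: power_int_add)
  show "cst Q powi (12*n - 12*m) = (cst Q powi n) ^ 12 * inverse (cst Q powi m) ^ 12"
    using c by (simp add: pw[OF c] power_int_diff power_inverse divide_inverse)
  show "cst Q powi (10*n - 11*m) = (cst Q powi n) ^ 10 * inverse (cst Q powi m) ^ 11"
    using c by (simp add: pw[OF c] power_int_diff power_inverse divide_inverse)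
qed

theorem propositionB2:
  fixes Q :: complex and n m N :: int
  assumes "Q \<noteq> 0"
    and "\<forall>k::nat. 0 < k \<longrightarrow> Q ^ k \<noteq> 1"
  shows
    "((1 - cst Q powi (-12*m) * alpha Q 2 ^ 12) * tauNM Q n m (N+1) * tauNM Q n m (N-1)
       + cst Q powi (n - 11*m) * alpha Q 0 * alpha Q 2 ^ 11 * tauNM Q (n+1) (m+1) N * tauNM Q (n-1) (m-1) N
       - cst Q powi (n - 2*m) * alpha Q 0 * alpha Q 2 ^ 2 * tauNM Q n (m+1) N * tauNM Q n (m-1) N = 0) \<and>
    ((1 - cst Q powi (12*n) * alpha Q 0 ^ 12) * tauNM Q n m (N+1) * tauNM Q n m (N-1)
       + cst Q powi (10*n + m) * alpha Q 0 ^ 10 * alpha Q 2 powi (-1) * tauNM Q (n+1) m N * tauNM Q (n-1) m N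
       - cst Q powi (n + m) * alpha Q 0 * alpha Q 2 powi (-1) * tauNM Q (n+1) (m+1) N * tauNM Q (n-1) (m-1) N = 0) \<and>
    ((1 - cst Q powi (12*n - 12*m) * alpha Q 0 ^ 12 * alpha Q 2 ^ 12) * tauNM Q n m (N+1) * tauNM Q n m (N-1)
       + cst Q powi (10*n - 11*m) * alpha Q 0 ^ 10 * alpha Q 2 ^ 11 * tauNM Q (n+1) m N * tauNM Q (n-1) m N
       - cst Q powi (n - 2*m) * alpha Q 0 * alpha Q 2 ^ 2 * tauNM Q n (m+1) N * tauNM Q n (m-1) N = 0)"
proof -
  have Q: "Q \<noteq> 0" by (rule assms(1))
  have h: "fhom (HH Q n m N)" by (rule HHs[OF Q])
  note fhs = fh_add[OF h] fh_diff[OF h] fh_mult[OF h] fh_power[OF h] fh_powi[OF h] fh_1[OF h] HA0[OF Q] HA2[OF Q] HH_tau[OF Q]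
  have z1: "HH Q n m N ((1 - alpha Q 2 ^ 12) * tauNM Q 0 0 1 * tauNM Q 0 0 (-1)
   + alpha Q 0 * alpha Q 2 ^ 11 * tauNM Q 1 1 0 * tauNM Q (-1) (-1) 0
   - alpha Q 0 * alpha Q 2 ^ 2 * tauNM Q 0 1 0 * tauNM Q 0 (-1) 0) = 0"
    by (simp only: base1'[OF Q] fh_0[OF h])
  have z2: "HH Q n m N ((1 - alpha Q 0 ^ 12) * tauNM Q 0 0 1 * tauNM Q 0 0 (-1)
   + alpha Q 0 ^ 10 * alpha Q 2 powi (-1) * tauNM Q 1 0 0 * tauNM Q (-1) 0 0
   - alpha Q 0 * alpha Q 2 powi (-1) * tauNM Q 1 1 0 * tauNM Q (-1) (-1) 0) = 0"
    by (simp only: base2'[OF Q] fh_0[OF h])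
  have z3: "HH Q n m N ((1 - alpha Q 0 ^ 12 * alpha Q 2 ^ 12) * tauNM Q 0 0 1 * tauNM Q 0 0 (-1)
   + alpha Q 0 ^ 10 * alpha Q 2 ^ 11 * tauNM Q 1 0 0 * tauNM Q (-1) 0 0
   - alpha Q 0 * alpha Q 2 ^ 2 * tauNM Q 0 1 0 * tauNM Q 0 (-1) 0) = 0"
    by (simp only: base3'[OF Q] fh_0[OF h])
  have g1: "(1 - cst Q powi (-12*m) * alpha Q 2 ^ 12) * tauNM Q n m (N+1) * tauNM Q n m (N-1)
       + cst Q powi (n - 11*m) * alpha Q 0 * alpha Q 2 ^ 11 * tauNM Q (n+1) (m+1) N * tauNM Q (n-1) (m-1) N
       - cst Q powi (n - 2*m) * alpha Q 0 * alpha Q 2 ^ 2 * tauNM Q n (m+1) N * tauNM Q n (m-1) N = HH Q n m N (((1 - alpha Q 2 ^ 12) * tauNM Q 0 0 1 * tauNM Q 0 0 (-1)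
   + alpha Q 0 * alpha Q 2 ^ 11 * tauNM Q 1 1 0 * tauNM Q (-1) (-1) 0
   - alpha Q 0 * alpha Q 2 ^ 2 * tauNM Q 0 1 0 * tauNM Q 0 (-1) 0))"
    apply (simp only: fhs coef[OF Q])
    apply (simp add: Q field_simps power_int_minus pw2)
    apply algebra?
    done
  have g2: "(1 - cst Q powi (12*n) * alpha Q 0 ^ 12) * tauNM Q n m (N+1) * tauNM Q n m (N-1)
       + cst Q powi (10*n + m) * alpha Q 0 ^ 10 * alpha Q 2 powi (-1) * tauNM Q (n+1) m N * tauNM Q (n-1) m N
       - cst Q powi (n + m) * alpha Q 0 * alpha Q 2 powi (-1) * tauNM Q (n+1) (m+1) N * tauNM Q (n-1) (m-1) N = HH Q n m N (((1 - alpha Q 0 ^ 12) * tauNM Q 0 0 1 * tauNM Q 0 0 (-1)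
   + alpha Q 0 ^ 10 * alpha Q 2 powi (-1) * tauNM Q 1 0 0 * tauNM Q (-1) 0 0
   - alpha Q 0 * alpha Q 2 powi (-1) * tauNM Q 1 1 0 * tauNM Q (-1) (-1) 0))"
    apply (simp only: fhs coef[OF Q])
    apply (simp add: Q field_simps power_int_minus pw2)
    apply algebra?
    done
  have g3: "(1 - cst Q powi (12*n - 12*m) * alpha Q 0 ^ 12 * alpha Q 2 ^ 12) * tauNM Q n m (N+1) * tauNM Q n m (N-1)
       + cst Q powi (10*n - 11*m) * alpha Q 0 ^ 10 * alpha Q 2 ^ 11 * tauNM Q (n+1) m N * tauNM Q (n-1) m N
       - cst Q powi (n - 2*m) * alpha Q 0 * alpha Q 2 ^ 2 * tauNM Q n (m+1) N * tauNM Q n (m-1) N = HH Q n m N (((1 - alpha Q 0 ^ 12 * alpha Q 2 ^ 12) * tauNM Q 0 0 1 * tauNM Q 0 0 (-1)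
   + alpha Q 0 ^ 10 * alpha Q 2 ^ 11 * tauNM Q 1 0 0 * tauNM Q (-1) 0 0
   - alpha Q 0 * alpha Q 2 ^ 2 * tauNM Q 0 1 0 * tauNM Q 0 (-1) 0))"
    apply (simp only: fhs coef[OF Q])
    apply (simp add: Q field_simps power_int_minus pw2)
    apply algebra?
    done
  show ?thesis using g1 g2 g3 z1 z2 z3 by simp
qed


end
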